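(* Let $\Pi$ be a Poisson process on $\mathbb{L}$ with intensity $\alpha\mu$, $\alpha>0$. For $n\ge1$ let $Z_n$ be the number of vertices $x$ with $d(\varnothing,x)=n$ such that no line of $\Pi$ meets the geodesic segment $[\![\varnothing,x]\!]$. Let $\mathcal{F}_n$ be the $\sigma$-algebra generated by the restriction of $\Pi$ to lines meeting $\{x:d(\varnothing,x)\le n\}$. Then for every $n\ge1$, conditionally on $\mathcal{F}_n$, $Z_{n+1}$ is distributed as a sum of $Z_n$ independent $\mathrm{Binomial}(2,e^{-\alpha/4})$ random variables. In particular, $(Z_n)_{n\ge1}$ is a Galton–Watson branching process with offspring law $\mathrm{Binomial}(2,e^{-\alpha/4})$.
   Context: $\mathbb{T}$ is the $3$-regular tree with graph distance $d$ and root $\varnothing$. A line is the vertex set of a bi-infinite geodesic, and $\mathbb{L}$ is the set of lines. $\mu$ is the unique Borel measure on $\mathbb{L}$ invariant under graph automorphisms with $\mu\{\ell:\ell\ni x,\ \ell\ni y\}=2^{-d(x,y)}$ for all $x\neq y$. *)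

theory Defs
  imports "HOL-Probability.Probability"
begin

text \<open>Vertices are words: the root is the empty word, the root has the three
children [0],[1],[2], every other vertex x has the two children x@[0], x@[1].\<close>

definition tverts :: "nat list set" where
  "tverts = {xs. xs = [] \<or> (hd xs < 3 \<and> (\<forall>a\<in>set (tl xs). a < 2))}"

definition troot :: "nat list" where
  "troot = []"

definition tadj :: "nat list \<Rightarrow> nat list \<Rightarrow> bool" where
  "tadj x y \<longleftrightarrow> x \<in> tverts \<and> y \<in> tverts \<and> ((\<exists>a. y = x @ [a]) \<or> (\<exists>a. x = y @ [a]))"

definition tdist :: "nat list \<Rightarrow> nat list \<Rightarrow> nat" where
  "tdist x y = (LEAST n. \<exists>p::nat \<Rightarrow> nat list. p 0 = x \<and> p n = y \<and>
                            (\<forall>i<n. tadj (p i) (p (Suc i))))"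

definition tsegment :: "nat list \<Rightarrow> nat list \<Rightarrow> nat list set" where
  "tsegment a b = {y \<in> tverts. tdist a y + tdist y b = tdist a b}"

definition tlines :: "nat list set set" where
  "tlines = {S. \<exists>g::int \<Rightarrow> nat list. (\<forall>i. g i \<in> tverts) \<and>
                 (\<forall>i j. tdist (g i) (g j) = nat \<bar>i - j\<bar>) \<and> S = range g}"

definition tautom :: "(nat list \<Rightarrow> nat list) \<Rightarrow> bool" where
  "tautom \<sigma> \<longleftrightarrow> bij_betw \<sigma> tverts tverts \<and>
     (\<forall>x\<in>tverts. \<forall>y\<in>tverts. tadj (\<sigma> x) (\<sigma> y) \<longleftrightarrow> tadj x y)"

text \<open>Borel sigma-algebra on the set of lines (lines viewed as elements of the
product space {0,1}^V; generated by the cylinders "the line contains x").\<close>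
definition lines_space :: "nat list set measure" where
  "lines_space = sigma tlines {{l \<in> tlines. x \<in> l} | x. x \<in> tverts}"

definition is_line_measure :: "nat list set measure \<Rightarrow> bool" where
  "is_line_measure \<mu> \<longleftrightarrow>
     sets \<mu> = sets lines_space \<and>
     (\<forall>\<sigma>. tautom \<sigma> \<longrightarrow> (\<forall>A\<in>sets \<mu>.
        emeasure \<mu> ((\<lambda>l. \<sigma> ` l) -` A \<inter> tlines) = emeasure \<mu> A)) \<and>
     (\<forall>x\<in>tverts. \<forall>y\<in>tverts. x \<noteq> y \<longrightarrow>
        emeasure \<mu> {l \<in> tlines. x \<in> l \<and> y \<in> l} = ennreal ((1/2) ^ tdist x y))"

definition ncount :: "'a set \<Rightarrow> 'a set \<Rightarrow> enat" where
  "ncount S A = (if finite (S \<inter> A) then enat (card (S \<inter> A)) else \<infinity>)"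

definition poisson_process :: "'w measure \<Rightarrow> 'a measure \<Rightarrow> ('w \<Rightarrow> 'a set) \<Rightarrow> bool" where
  "poisson_process M \<nu> PP \<longleftrightarrow>
     prob_space M \<and>
     (\<forall>\<omega>\<in>space M. PP \<omega> \<subseteq> space \<nu>) \<and>
     (\<forall>A\<in>sets \<nu>. (\<lambda>\<omega>. ncount (PP \<omega>) A) \<in> measurable M (count_space UNIV)) \<and>
     (\<forall>A\<in>sets \<nu>. emeasure \<nu> A < \<infinity> \<longrightarrow> (\<forall>k::nat.
        measure M {\<omega> \<in> space M. ncount (PP \<omega>) A = enat k} =
          (enn2real (emeasure \<nu> A)) ^ k / fact k * exp (- enn2real (emeasure \<nu> A)))) \<and>
     (\<forall>A\<in>sets \<nu>. emeasure \<nu> A = \<infinity> \<longrightarrow>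
        (AE \<omega> in M. ncount (PP \<omega>) A = \<infinity>)) \<and>
     (\<forall>(I::nat set) A. finite I \<longrightarrow> (\<forall>i\<in>I. A i \<in> sets \<nu>) \<longrightarrow> disjoint_family_on A I \<longrightarrow>
        prob_space.indep_vars M (\<lambda>_. count_space UNIV) (\<lambda>i \<omega>. ncount (PP \<omega>) (A i)) I)"

definition Zcount :: "nat list set set \<Rightarrow> nat \<Rightarrow> nat" where
  "Zcount P n = card {x \<in> tverts. tdist troot x = n \<and>
                       (\<forall>l\<in>P. l \<inter> tsegment troot x = {})}"

definition lines_meeting_ball :: "nat \<Rightarrow> nat list set set" where
  "lines_meeting_ball n = {l \<in> tlines. \<exists>x\<in>l. tdist troot x \<le> n}"

text \<open>F_n: sigma-algebra generated by the restriction of Pi to lines meeting the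
ball of radius n (i.e. by the counts of Pi in measurable subsets of those lines).\<close>
definition Fn :: "'w measure \<Rightarrow> ('w \<Rightarrow> nat list set set) \<Rightarrow> nat \<Rightarrow> 'w measure" where
  "Fn M PP n = sigma (space M)
     {(\<lambda>\<omega>. ncount (PP \<omega>) A) -` B \<inter> space M | A B.
        A \<in> sets lines_space \<and> A \<subseteq> lines_meeting_ball n}"

definition iid_sum_pmf :: "nat \<Rightarrow> nat pmf \<Rightarrow> nat pmf" where
  "iid_sum_pmf m q = map_pmf (\<lambda>f. \<Sum>i<m. f i) (Pi_pmf {..<m} 0 (\<lambda>_. q))"

definition cond_iid_sum :: "'w measure \<Rightarrow> 'w measure \<Rightarrow> ('w \<Rightarrow> nat) \<Rightarrow> ('w \<Rightarrow> nat) \<Rightarrow> nat pmf \<Rightarrow> bool" where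
  "cond_iid_sum M F Y X q \<longleftrightarrow> (\<forall>k::nat.
     AE \<omega> in M. real_cond_exp M F (indicator {\<omega>\<in>space M. Y \<omega> = k}) \<omega> =
                 pmf (iid_sum_pmf (X \<omega>) q) k)"

definition hist :: "'w measure \<Rightarrow> (nat \<Rightarrow> 'w \<Rightarrow> nat) \<Rightarrow> nat \<Rightarrow> 'w measure" where
  "hist M Z n = sigma (space M) {Z i -` B \<inter> space M | i B. 1 \<le> i \<and> i \<le> n}"

definition galton_watson :: "'w measure \<Rightarrow> (nat \<Rightarrow> 'w \<Rightarrow> nat) \<Rightarrow> nat pmf \<Rightarrow> bool" where
  "galton_watson M Z q \<longleftrightarrow> (\<forall>n\<ge>1. cond_iid_sum M (hist M Z n) (Z (Suc n)) (Z n) q)"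

end

theory Submission
  imports Defs
begin

fun lcp :: "nat list \<Rightarrow> nat list \<Rightarrow> nat" where
  "lcp (a#x) (b#y) = (if a = b then Suc (lcp x y) else 0)"
| "lcp _ _ = 0"

definition D :: "nat list \<Rightarrow> nat list \<Rightarrow> nat" where
  "D x y = length x + length y - 2 * lcp x y"

lemma lcp_le1: "lcp x y \<le> length x"
  by (induction x y rule: lcp.induct) auto
lemma lcp_le2: "lcp x y \<le> length y"
  by (induction x y rule: lcp.induct) auto
lemma lcp_take: "take (lcp x y) x = take (lcp x y) y"
  by (induction x y rule: lcp.induct) auto
lemma lcp_sym: "lcp x y = lcp y x"
  by (induction x y rule: lcp.induct) auto
lemma lcp_nil[simp]: "lcp [] y = 0"
  by (cases y) auto
lemma lcp_max: "take k x = take k y \<Longrightarrow> k \<le> length x \<Longrightarrow> k \<le> length y \<Longrightarrow> k \<le> lcp x y"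
proof (induction x y arbitrary: k rule: lcp.induct)
  case (1 a x b y)
  then show ?case by (cases k) auto
qed auto
lemma lcp_next: "lcp x y < length x \<Longrightarrow> lcp x y < length y \<Longrightarrow> x ! lcp x y \<noteq> y ! lcp x y"
  by (induction x y rule: lcp.induct) auto

lemma lcp_snoc: "lcp x y \<le> lcp x (y @ [a]) \<and> lcp x (y @ [a]) \<le> Suc (lcp x y)"
proof (induction x arbitrary: y)
  case (Cons b x)
  then show ?case by (cases y) auto
qed simp

lemma D_snoc1: "D x (y @ [a]) \<le> Suc (D x y)"
  using lcp_snoc[of x y a] lcp_le1[of x y] lcp_le2[of x y] lcp_le1[of x "y@[a]"] lcp_le2[of x "y@[a]"]
  unfolding D_def by (simp only: length_append list.size) linarith
lemma D_snoc2: "D x y \<le> Suc (D x (y @ [a]))"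
  using lcp_snoc[of x y a] lcp_le1[of x y] lcp_le2[of x y] lcp_le1[of x "y@[a]"] lcp_le2[of x "y@[a]"]
  unfolding D_def by (simp only: length_append list.size) linarith

lemma tadj_D: "tadj u v \<Longrightarrow> D x v \<le> Suc (D x u)"
  unfolding tadj_def using D_snoc1 D_snoc2 by auto

lemma D_self: "D x x = 0"
proof -
  have "length x \<le> lcp x x" using lcp_max[of "length x" x x] by simp
  then show ?thesis unfolding D_def by simp
qed

lemma path_lower: "p 0 = x \<Longrightarrow> (\<forall>i<n. tadj (p i) (p (Suc i))) \<Longrightarrow> D x (p n) \<le> n"
proof (induction n)
  case 0
  then show ?case using D_self by simp
next
  case (Suc n)
  then have "D x (p n) \<le> n" by auto
  moreover have "D x (p (Suc n)) \<le> Suc (D x (p n))" using Suc.prems tadj_D by auto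
  ultimately show ?case by simp
qed


lemma tverts_take: "x \<in> tverts \<Longrightarrow> take k x \<in> tverts"
  unfolding tverts_def by (cases x; cases k) (auto dest: in_set_takeD)

lemma tverts_snoc: "x \<in> tverts \<Longrightarrow> x \<noteq> [] \<Longrightarrow> a < 2 \<Longrightarrow> x @ [a] \<in> tverts"
  unfolding tverts_def by (cases x) auto

lemma tverts_snoc_iff: "x \<noteq> [] \<Longrightarrow> x @ [a] \<in> tverts \<longleftrightarrow> x \<in> tverts \<and> a < 2"
  unfolding tverts_def by (cases x) auto

lemma take_Suc_snoc: "k < length y \<Longrightarrow> take (Suc k) y = take k y @ [y ! k]"
  by (simp add: take_Suc_conv_app_nth)

lemma path_upper:
  assumes "x \<in> tverts" "y \<in> tverts"
  shows "\<exists>p. p 0 = x \<and> p (D x y) = y \<and> (\<forall>i<D x y. tadj (p i) (p (Suc i)))"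
proof -
  let ?l = "lcp x y"
  let ?a = "length x - ?l"
  define p where "p i = (if i \<le> ?a then take (length x - i) x else take (?l + (i - ?a)) y)" for i
  have l1: "?l \<le> length x" and l2: "?l \<le> length y" by (rule lcp_le1, rule lcp_le2)
  have tk: "take ?l x = take ?l y" by (rule lcp_take)
  have Dv: "D x y = ?a + (length y - ?l)" unfolding D_def using l1 l2 by simp
  have "p 0 = x" unfolding p_def by simp
  moreover have "p (D x y) = y" unfolding p_def Dv using l1 l2 tk by auto
  moreover have "tadj (p i) (p (Suc i))" if i: "i < D x y" for i
  proof (cases "Suc i \<le> ?a")
    case True
    have e1: "p i = take (length x - i) x" unfolding p_def using True by simp
    have e2: "p (Suc i) = take (length x - Suc i) x" unfolding p_def using True by simp
    have "p i = p (Suc i) @ [x ! (length x - Suc i)]" unfolding e1 e2 using True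
      by (simp add: take_Suc_snoc[symmetric] Suc_diff_Suc)
    moreover have "p i \<in> tverts" "p (Suc i) \<in> tverts" by (simp_all add: e1 e2 tverts_take assms)
    ultimately show ?thesis unfolding tadj_def by blast
  next
    case False
    then have ia: "?a \<le> i" by simp
    have e1: "p i = take (?l + (i - ?a)) y" using ia unfolding p_def using tk l1
      by (cases "i = ?a") (auto simp: diff_diff_cancel)
    have e2: "p (Suc i) = take (?l + (i - ?a)) y @ [y ! (?l + (i - ?a))]" unfolding p_def using False i Dv
      by (simp add: take_Suc_snoc[symmetric] Suc_diff_le ia)
    have e3: "p (Suc i) = take (Suc i - ?a + ?l) y" unfolding p_def using False by (simp add: add.commute)
    have "p i \<in> tverts" "p (Suc i) \<in> tverts" unfolding e1 e3 by (simp_all add: tverts_take assms)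
    moreover have "p (Suc i) = p i @ [y ! (?l + (i - ?a))]" using e1 e2 by simp
    ultimately show ?thesis unfolding tadj_def by blast
  qed
  ultimately show ?thesis by blast
qed

lemma tdist_eq: assumes "x \<in> tverts" "y \<in> tverts" shows "tdist x y = D x y"
  unfolding tdist_def
proof (rule Least_equality)
  show "\<exists>p. p 0 = x \<and> p (D x y) = y \<and> (\<forall>i<D x y. tadj (p i) (p (Suc i)))"
    by (rule path_upper[OF assms])
next
  fix n assume "\<exists>p. p 0 = x \<and> p n = y \<and> (\<forall>i<n. tadj (p i) (p (Suc i)))"
  then show "D x y \<le> n" using path_lower by blast
qed

lemma tdist_root: "x \<in> tverts \<Longrightarrow> tdist troot x = length x"
  using tdist_eq[of troot x] unfolding troot_def D_def by (simp add: tverts_def)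

lemma D0: "D x y = 0 \<Longrightarrow> x = y"
proof -
  assume "D x y = 0"
  then have "lcp x y = length x" "lcp x y = length y" using lcp_le1[of x y] lcp_le2[of x y]
    unfolding D_def by auto
  then show "x = y" using lcp_take[of x y] by (metis take_all_iff order_refl)
qed

lemma D1: "D x y = 1 \<Longrightarrow> (\<exists>a. y = x @ [a]) \<or> (\<exists>a. x = y @ [a])"
proof -
  assume d: "D x y = 1"
  let ?l = "lcp x y"
  have l1: "?l \<le> length x" and l2: "?l \<le> length y" by (rule lcp_le1, rule lcp_le2)
  have tk: "take ?l x = take ?l y" by (rule lcp_take)
  have "length x + length y = 2 * ?l + 1" using d l1 l2 unfolding D_def by simp
  then have "(length x = ?l \<and> length y = Suc ?l) \<or> (length y = ?l \<and> length x = Suc ?l)"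
    using l1 l2 by linarith
  then show ?thesis
  proof
    assume h: "length x = ?l \<and> length y = Suc ?l"
    then have "y = take ?l y @ [y ! ?l]" by (metis lessI take_Suc_snoc take_all_iff order_refl)
    then show ?thesis using tk h by (metis take_all_iff order_refl)
  next
    assume h: "length y = ?l \<and> length x = Suc ?l"
    then have "x = take ?l x @ [x ! ?l]" by (metis lessI take_Suc_snoc take_all_iff order_refl)
    then show ?thesis using tk h by (metis take_all_iff order_refl)
  qed
qed

lemma D_snoc_snoc: "D (c @ [a]) (c @ [b]) = (if a = b then 0 else 2)"
proof -
  have "lcp (c@[a]) (c@[b]) = length c + (if a = b then 1 else 0)"
    by (induction c) auto
  then show ?thesis unfolding D_def by auto
qed

lemma D_prefix: "D y x = length x - length y \<longleftrightarrow> take (length y) x = y"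
proof
  assume h: "D y x = length x - length y"
  have l1: "lcp y x \<le> length y" and l2: "lcp y x \<le> length x" by (rule lcp_le1, rule lcp_le2)
  have "lcp y x = length y" using h l1 l2 unfolding D_def by linarith
  then show "take (length y) x = y" using lcp_take[of y x] by (metis take_all_iff order_refl)
next
  assume h: "take (length y) x = y"
  then have ly: "length y \<le> length x" by (metis length_take min.cobounded1)
  have "length y \<le> lcp y x" using lcp_max[of "length y" y x] h ly by simp
  then show "D y x = length x - length y" using lcp_le1[of y x] unfolding D_def by simp
qed

lemma tsegment_root: assumes "x \<in> tverts"
  shows "tsegment troot x = {take k x | k. k \<le> length x}"
proof -
  have "y \<in> tsegment troot x \<longleftrightarrow> (\<exists>k\<le>length x. y = take k x)" for y
  proof
    assume "y \<in> tsegment troot x"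
    then have y: "y \<in> tverts" "length y + D y x = length x"
      unfolding tsegment_def using tdist_root tdist_eq assms by auto
    then have "take (length y) x = y" using D_prefix by (metis add_diff_cancel_left')
    then show "\<exists>k\<le>length x. y = take k x" using y by (metis le_add1)
  next
    assume "\<exists>k\<le>length x. y = take k x"
    then obtain k where k: "k \<le> length x" "y = take k x" by auto
    then have "D y x = length x - length y" using D_prefix[of y x] by (simp add: min_def)
    then show "y \<in> tsegment troot x" unfolding tsegment_def
      using tdist_root tdist_eq assms tverts_take k by auto
  qed
  then show ?thesis by auto
qed


definition geod :: "(int \<Rightarrow> nat list) \<Rightarrow> bool" where
  "geod g \<longleftrightarrow> (\<forall>i. g i \<in> tverts) \<and> (\<forall>i j. tdist (g i) (g j) = nat \<bar>i - j\<bar>)"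

lemma tlines_geod: "l \<in> tlines \<longleftrightarrow> (\<exists>g. geod g \<and> l = range g)"
  unfolding tlines_def geod_def by auto

lemma geodD: "geod g \<Longrightarrow> D (g i) (g j) = nat \<bar>i - j\<bar>"
  unfolding geod_def using tdist_eq by metis

lemma geod_tverts: "geod g \<Longrightarrow> g i \<in> tverts"
  unfolding geod_def by auto

lemma geod_reflect: "geod g \<Longrightarrow> geod (\<lambda>i. g (- i))"
  unfolding geod_def by (auto simp: abs_minus_commute)

lemma geod_step: "geod g \<Longrightarrow> (\<exists>a. g (i+1) = g i @ [a]) \<or> (\<exists>a. g i = g (i+1) @ [a])"
  using geodD[of g i "i+1"] D1 by simp

lemma geod_up_step:
  assumes g: "geod g" and h: "length (g (k+1)) = Suc (length (g k))"
  shows "length (g (k+2)) = Suc (length (g (k+1)))"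
proof -
  obtain a where a: "g (k+1) = g k @ [a]" using geod_step[OF g, of k] h by auto
  have "\<not> (\<exists>b. g (k+1) = g (k+1+1) @ [b])"
  proof
    assume "\<exists>b. g (k+1) = g (k+1+1) @ [b]"
    then obtain b where "g (k+1) = g (k+2) @ [b]" by (auto simp: add.assoc)
    then have "g (k+2) = g k" using a by simp
    then have "D (g k) (g (k+2)) = 0" using D_self by simp
    moreover have "D (g k) (g (k+2)) = 2" using geodD[OF g, of k "k+2"] by simp
    ultimately show False by simp
  qed
  then obtain b where "g (k+1+1) = g (k+1) @ [b]" using geod_step[OF g, of "k+1"] by auto
  then show ?thesis by (simp add: add.assoc)
qed

lemma geod_up:
  assumes g: "geod g" and h: "length (g (m+1)) = Suc (length (g m))"
  shows "length (g (m + int d)) = length (g m) + d"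
proof -
  have "length (g (m + int d + 1)) = Suc (length (g (m + int d)))" for d
  proof (induction d)
    case 0 then show ?case using h by simp
  next
    case (Suc d)
    define e where "e = m + int d"
    have IH: "length (g (e + 1)) = Suc (length (g e))" using Suc unfolding e_def .
    have st: "length (g (e + 2)) = Suc (length (g (e + 1)))" by (rule geod_up_step[OF g IH])
    have q1: "m + int (Suc d) + 1 = e + 2" and q2: "m + int (Suc d) = e + 1" unfolding e_def by simp_all
    show ?case unfolding q2 using st by (simp add: add.assoc)
  qed
  note st = this
  show ?thesis
  proof (induction d)
    case (Suc d)
    have q: "m + int (Suc d) = m + int d + 1" by simp
    show ?case unfolding q using Suc.IH st[of d] by simp
  qed simp
qed

lemma geod_V:
  assumes g: "geod g" and h1: "length (g (m+1)) = Suc (length (g m))"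
    and h2: "length (g (m - 1)) = Suc (length (g m))"
  shows "length (g k) = length (g m) + nat \<bar>k - m\<bar>"
proof (cases "k \<ge> m")
  case True
  then obtain d where "k = m + int d" by (metis zle_iff_zadd)
  then show ?thesis using geod_up[OF g h1, of d] by simp
next
  case False
  let ?g = "\<lambda>i. g (- i)"
  have g': "geod ?g" by (rule geod_reflect[OF g])
  have h2': "length (?g (-m + 1)) = Suc (length (?g (-m)))" using h2 by simp
  define d where "d = nat (m - k)"
  have kd: "k = m - int d" using False unfolding d_def by simp
  have e: "- (- m + int d) = k" using kd by simp
  have "length (?g (-m + int d)) = length (?g (-m)) + d" by (rule geod_up[OF g' h2'])
  then have "length (g k) = length (g m) + d" using e by simp
  moreover have "nat \<bar>k - m\<bar> = d" using kd by simp
  ultimately show ?thesis by simp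
qed

lemma geod_mid:
  assumes g: "geod g" and i: "g i = c @ [a]" and j: "g (i+2) = c @ [b]" and ab: "a \<noteq> b"
  shows "g (i+1) = c"
proof -
  have d1: "D (g (i+1)) (g i) = 1" using geodD[OF g] by simp
  have d2: "D (g (i+1)) (g (i+2)) = 1" using geodD[OF g] by simp
  from D1[OF d1] show ?thesis
  proof
    assume "\<exists>e. g i = g (i+1) @ [e]"
    then show ?thesis using i by auto
  next
    assume "\<exists>e. g (i+1) = g i @ [e]"
    then obtain e where e: "g (i+1) = c @ [a, e]" using i by auto
    from D1[OF d2] show ?thesis
    proof
      assume "\<exists>e'. g (i+2) = g (i+1) @ [e']" then show ?thesis using e j by auto
    next
      assume "\<exists>e'. g (i+1) = g (i+2) @ [e']" then show ?thesis using e j ab by auto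
    qed
  qed
qed

definition Ec :: "nat list \<Rightarrow> nat list set set" where
  "Ec c = {l \<in> tlines. c @ [0] \<in> l \<and> c @ [1] \<in> l}"

lemma Ec_min:
  assumes l: "l \<in> Ec c"
  shows "c \<in> l \<and> (\<forall>v\<in>l. length c \<le> length v \<and> (length v = length c \<longrightarrow> v = c))"
proof -
  obtain g where g: "geod g" "l = range g" using l unfolding Ec_def tlines_geod by auto
  obtain i j where ij: "g i = c @ [0]" "g j = c @ [1]" using l g unfolding Ec_def by auto
  have "D (g i) (g j) = 2" using ij D_snoc_snoc by simp
  then have "nat \<bar>i - j\<bar> = 2" using geodD[OF g(1)] by simp
  then have "j = i + 2 \<or> i = j + 2" by arith
  then obtain m where m: "g m = c" "length (g (m+1)) = Suc (length c)" "length (g (m - 1)) = Suc (length c)"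
  proof
    assume j: "j = i + 2"
    have "g (i+1) = c" using geod_mid[OF g(1), of i c 0 1] ij j by simp
    moreover have "i + 1 + 1 = j" "i + 1 - 1 = i" using j by simp_all
    ultimately show ?thesis using that[of "i+1"] ij by simp
  next
    assume i: "i = j + 2"
    have "g (j+1) = c" using geod_mid[OF g(1), of j c 1 0] ij i by simp
    moreover have "j + 1 + 1 = i" "j + 1 - 1 = j" using i by simp_all
    ultimately show ?thesis using that[of "j+1"] ij by simp
  qed
  have V: "length (g k) = length c + nat \<bar>k - m\<bar>" for k
    using geod_V[OF g(1), of m k] m by simp
  have "c \<in> l" using g m by auto
  moreover have "length c \<le> length v \<and> (length v = length c \<longrightarrow> v = c)" if v: "v \<in> l" for v
  proof -
    obtain k where k: "v = g k" using v g by auto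
    show ?thesis using V[of k] k m(1) by (cases "k = m") auto
  qed
  ultimately show ?thesis by blast
qed

lemma Ec_cover:
  assumes l: "l \<in> tlines" and c: "c \<in> l" "c \<noteq> []" and nb: "butlast c \<notin> l"
  shows "l \<in> Ec c"
proof -
  obtain g where g: "geod g" "l = range g" using l unfolding tlines_geod by auto
  obtain i where i: "g i = c" using c g by auto
  have child: "\<exists>a. a < 2 \<and> g k = c @ [a]" if "D c (g k) = 1" for k
  proof -
    from D1[OF that] show ?thesis
    proof
      assume "\<exists>a. c = g k @ [a]"
      then have "g k = butlast c" by (metis butlast_snoc)
      then have False using nb g(2) rangeI[of g k] by simp
      then show ?thesis by blast
    next
      assume "\<exists>a. g k = c @ [a]"
      then obtain a where a: "g k = c @ [a]" by auto
      then have "a < 2" using geod_tverts[OF g(1), of k] tverts_snoc_iff[OF c(2)] by simp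
      then show ?thesis using a by auto
    qed
  qed
  have "D c (g (i+1)) = 1" using geodD[OF g(1), of i "i+1"] i by simp
  then obtain a where a: "a < 2" "g (i+1) = c @ [a]" using child[of "i+1"] by blast
  have "D c (g (i-1)) = 1" using geodD[OF g(1), of i "i-1"] i by simp
  then obtain b where b: "b < 2" "g (i-1) = c @ [b]" using child[of "i-1"] by blast
  have "D (g (i+1)) (g (i - 1)) = 2" using geodD[OF g(1)] by simp
  then have "a \<noteq> b" using a(2) b(2) D_self by (metis zero_neq_numeral)
  then have ab: "(a = 0 \<and> b = 1) \<or> (a = 1 \<and> b = 0)" using a(1) b(1) by arith
  have la: "c @ [a] \<in> l" using a(2) g(2) rangeI[of g "i+1"] by simp
  have lb: "c @ [b] \<in> l" using b(2) g(2) rangeI[of g "i-1"] by simp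
  have "c @ [0] \<in> l \<and> c @ [1] \<in> l" using ab la lb by blast
  then show ?thesis unfolding Ec_def using l by blast
qed


lemma ncount_zero: "ncount S A = 0 \<longleftrightarrow> S \<inter> A = {}"
  unfolding ncount_def by (auto simp: zero_enat_def)

lemma ncount_empty[simp]: "ncount S {} = 0"
  unfolding ncount_def by (simp add: zero_enat_def)

lemma ncount_Un: "A \<inter> B = {} \<Longrightarrow> ncount S (A \<union> B) = ncount S A + ncount S B"
proof -
  assume d: "A \<inter> B = {}"
  have e: "S \<inter> (A \<union> B) = (S \<inter> A) \<union> (S \<inter> B)" by auto
  show ?thesis
  proof (cases "finite (S \<inter> A) \<and> finite (S \<inter> B)")
    case True
    moreover have "(S \<inter> A) \<inter> (S \<inter> B) = {}" using d by auto
    ultimately show ?thesis unfolding ncount_def e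
      by (simp add: card_Un_disjoint)
  next
    case False
    then show ?thesis unfolding ncount_def e by auto
  qed
qed

lemma ncount_UN:
  assumes "finite I" "disjoint_family_on A I"
  shows "ncount S (\<Union>i\<in>I. A i) = (\<Sum>i\<in>I. ncount S (A i))"
  using assms
proof (induction I rule: finite_induct)
  case empty then show ?case by simp
next
  case (insert x F)
  have d: "A x \<inter> (\<Union>i\<in>F. A i) = {}" using insert.prems insert.hyps
    unfolding disjoint_family_on_def by auto
  have dF: "disjoint_family_on A F" using insert.prems disjoint_family_on_mono by blast
  have "ncount S (\<Union>i\<in>insert x F. A i) = ncount S (A x \<union> (\<Union>i\<in>F. A i))" by simp
  also have "\<dots> = ncount S (A x) + ncount S (\<Union>i\<in>F. A i)" by (rule ncount_Un[OF d])
  also have "\<dots> = ncount S (A x) + (\<Sum>i\<in>F. ncount S (A i))" using insert.IH[OF dF] by simp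
  also have "\<dots> = (\<Sum>i\<in>insert x F. ncount S (A i))" using insert.hyps by simp
  finally show ?case .
qed

definition atom :: "(nat \<Rightarrow> nat list set set) \<Rightarrow> nat \<Rightarrow> bool list \<Rightarrow> nat list set set" where
  "atom A k bl = {l \<in> tlines. \<forall>i<k. (l \<in> A i) = bl ! i}"

definition BL :: "nat \<Rightarrow> bool list set" where
  "BL k = {bl. length bl = k \<and> True \<in> set bl}"

lemma finite_BL: "finite (BL k)"
proof -
  have "BL k \<subseteq> {xs. set xs \<subseteq> UNIV \<and> length xs = k}" unfolding BL_def by auto
  then show ?thesis using finite_lists_length_eq[of "UNIV :: bool set" k] finite_subset by auto
qed

lemma atom_sub: "bl \<in> BL k \<Longrightarrow> (\<forall>i<k. A i \<subseteq> R) \<Longrightarrow> atom A k bl \<subseteq> R"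
  unfolding BL_def atom_def by (auto simp: in_set_conv_nth)

lemma atom_disj: "length bl = k \<Longrightarrow> length bl' = k \<Longrightarrow> bl \<noteq> bl' \<Longrightarrow> atom A k bl \<inter> atom A k bl' = {}"
  unfolding atom_def by (auto simp: list_eq_iff_nth_eq)

lemma atom_cover:
  assumes "i < k" "\<forall>j<k. A j \<subseteq> tlines"
  shows "A i = (\<Union>bl\<in>{bl\<in>BL k. bl ! i}. atom A k bl)"
proof
  show "A i \<subseteq> (\<Union>bl\<in>{bl\<in>BL k. bl ! i}. atom A k bl)"
  proof
    fix l assume l: "l \<in> A i"
    define bl where "bl = map (\<lambda>j. l \<in> A j) [0..<k]"
    have len: "length bl = k" unfolding bl_def by simp
    have nth: "bl ! j = (l \<in> A j)" if "j < k" for j unfolding bl_def using that by simp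
    have bi: "bl ! i" using nth[OF assms(1)] l by simp
    moreover have "True \<in> set bl" using bi nth_mem[of i bl] len assms(1) by auto
    then have "bl \<in> BL k" unfolding BL_def using len by simp
    moreover have "l \<in> tlines" using l assms by blast
    then have "l \<in> atom A k bl" unfolding atom_def using nth by simp
    ultimately show "l \<in> (\<Union>bl\<in>{bl\<in>BL k. bl ! i}. atom A k bl)" by blast
  qed
next
  show "(\<Union>bl\<in>{bl\<in>BL k. bl ! i}. atom A k bl) \<subseteq> A i"
    unfolding atom_def using assms by auto
qed

lemma space_lines_space: "space lines_space = tlines"
  unfolding lines_space_def by (simp add: space_measure_of_conv)

lemma sets_lines_space: "sets lines_space = sigma_sets tlines {{l \<in> tlines. x \<in> l} | x. x \<in> tverts}"
  unfolding lines_space_def by (rule sets_measure_of) auto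

lemma ls_sub: "A \<in> sets lines_space \<Longrightarrow> A \<subseteq> tlines"
  using sets.sets_into_space[of A lines_space] space_lines_space by simp

lemma atom_meas:
  assumes "\<forall>i<k. A i \<in> sets lines_space"
  shows "atom A k bl \<in> sets lines_space"
proof -
  have *: "{l \<in> space lines_space. (l \<in> A i) = bl ! i} \<in> sets lines_space" if i: "i \<in> {..<k}" for i
  proof (cases "bl ! i")
    case True
    have Ai: "A i \<in> sets lines_space" using assms i by simp
    have "{l \<in> space lines_space. (l \<in> A i) = bl ! i} = A i" using True ls_sub[OF Ai] space_lines_space by auto
    then show ?thesis using Ai by simp
  next
    case False
    have Ai: "A i \<in> sets lines_space" using assms i by simp
    have "{l \<in> space lines_space. (l \<in> A i) = bl ! i} = space lines_space - A i" using False by auto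
    then show ?thesis using sets.compl_sets[OF Ai] by simp
  qed
  have H: "{l \<in> space lines_space. \<forall>i\<in>{..<k}. (l \<in> A i) = bl ! i} \<in> sets lines_space"
    by (rule sets.sets_Collect_finite_All[OF *]) simp_all
  have eq: "atom A k bl = {l \<in> space lines_space. \<forall>i\<in>{..<k}. (l \<in> A i) = bl ! i}"
    unfolding atom_def space_lines_space lessThan_iff by blast
  show ?thesis unfolding eq by (rule H)
qed


definition Gen :: "'w measure \<Rightarrow> ('w \<Rightarrow> nat list set set) \<Rightarrow> nat list set set \<Rightarrow> 'w set set" where
  "Gen M PP R = {{\<omega> \<in> space M. \<forall>i<(k::nat). ncount (PP \<omega>) (A i) \<in> B i} | k A B.
              \<forall>i<k. A i \<in> sets lines_space \<and> A i \<subseteq> R}"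

locale PPs =
  fixes M :: "'w measure" and \<mu> :: "nat list set measure"
    and PP :: "'w \<Rightarrow> nat list set set" and \<alpha> :: real
  assumes apos: "\<alpha> > 0" and lm: "is_line_measure \<mu>"
    and ppr: "poisson_process M (scale_measure (ennreal \<alpha>) \<mu>) PP"
begin

abbreviation "\<nu> \<equiv> scale_measure (ennreal \<alpha>) \<mu>"

lemmas pp = ppr[unfolded poisson_process_def]
lemmas pp1 = pp[THEN conjunct1]
lemmas pp2 = pp[THEN conjunct2, THEN conjunct1]
lemmas pp3 = pp[THEN conjunct2, THEN conjunct2, THEN conjunct1]
lemmas pp4 = pp[THEN conjunct2, THEN conjunct2, THEN conjunct2, THEN conjunct1]
lemmas pp6 = pp[THEN conjunct2, THEN conjunct2, THEN conjunct2, THEN conjunct2, THEN conjunct2]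

lemma prob: "prob_space M" by (rule pp1)

sublocale prob_space M by (rule prob)

lemma sets_nu: "sets \<nu> = sets lines_space"
  using lm unfolding is_line_measure_def by simp

lemma space_nu: "space \<nu> = tlines"
  using sets_eq_imp_space_eq[OF sets_nu] space_lines_space by simp

lemma PP_sub: "\<omega> \<in> space M \<Longrightarrow> PP \<omega> \<subseteq> tlines"
  using pp2 space_nu by blast

lemma N_meas: "A \<in> sets lines_space \<Longrightarrow> (\<lambda>\<omega>. ncount (PP \<omega>) A) \<in> measurable M (count_space UNIV)"
  using pp3 sets_nu by blast

lemma N_indep: "finite (I::nat set) \<Longrightarrow> (\<forall>i\<in>I. A i \<in> sets lines_space) \<Longrightarrow> disjoint_family_on A I \<Longrightarrow>
   indep_vars (\<lambda>_. count_space UNIV) (\<lambda>i \<omega>. ncount (PP \<omega>) (A i)) I"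
  using pp6 sets_nu by blast

lemma N_poisson0:
  assumes "A \<in> sets lines_space" "emeasure \<nu> A < \<infinity>"
  shows "prob {\<omega> \<in> space M. ncount (PP \<omega>) A = 0} = exp (- enn2real (emeasure \<nu> A))"
proof -
  have A: "A \<in> sets \<nu>" using assms(1) sets_nu by blast
  have "measure M {\<omega> \<in> space M. ncount (PP \<omega>) A = enat 0} =
          (enn2real (emeasure \<nu> A)) ^ 0 / fact 0 * exp (- enn2real (emeasure \<nu> A))"
    using pp4 A assms(2) by blast
  then show ?thesis by (simp add: zero_enat_def)
qed

lemma N_set_meas: assumes "A \<in> sets lines_space" shows "{\<omega> \<in> space M. ncount (PP \<omega>) A \<in> B} \<in> events"
proof -
  have "(\<lambda>\<omega>. ncount (PP \<omega>) A) -` B \<inter> space M \<in> events"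
    by (rule measurable_sets[OF N_meas[OF assms]]) simp
  moreover have "(\<lambda>\<omega>. ncount (PP \<omega>) A) -` B \<inter> space M = {\<omega> \<in> space M. ncount (PP \<omega>) A \<in> B}" by blast
  ultimately show ?thesis by simp
qed

lemma Gen_events: "Gen M PP R \<subseteq> events"
proof
  fix a assume "a \<in> Gen M PP R"
  then have "\<exists>k A B. a = {\<omega> \<in> space M. \<forall>i<(k::nat). ncount (PP \<omega>) (A i) \<in> B i} \<and>
              (\<forall>i<k. A i \<in> sets lines_space \<and> A i \<subseteq> R)" unfolding Gen_def by (simp only: mem_Collect_eq)
  then show "a \<in> events"
  proof (elim exE conjE)
    fix k :: nat and A B
    assume a: "a = {\<omega> \<in> space M. \<forall>i<k. ncount (PP \<omega>) (A i) \<in> B i}"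
      and A: "\<forall>i<k. A i \<in> sets lines_space \<and> A i \<subseteq> R"
    have *: "{\<omega> \<in> space M. ncount (PP \<omega>) (A i) \<in> B i} \<in> events" if "i \<in> {..<k}" for i
    proof -
      have "A i \<in> sets lines_space" using A that by simp
      then show ?thesis by (rule N_set_meas)
    qed
    have H: "{\<omega> \<in> space M. \<forall>i\<in>{..<k}. ncount (PP \<omega>) (A i) \<in> B i} \<in> events"
      by (rule sets.sets_Collect_finite_All[OF *]) simp_all
    have eq: "a = {\<omega> \<in> space M. \<forall>i\<in>{..<k}. ncount (PP \<omega>) (A i) \<in> B i}"
      unfolding a lessThan_iff by blast
    show "a \<in> events" unfolding eq by (rule H)
  qed
qed

lemma core_indep:
  fixes k1 k2 :: nat
  assumes R: "R1 \<inter> R2 = {}"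
    and A1: "\<forall>i<k1. A1 i \<in> sets lines_space \<and> A1 i \<subseteq> R1"
    and A2: "\<forall>i<k2. A2 i \<in> sets lines_space \<and> A2 i \<subseteq> R2"
  shows "prob ({\<omega> \<in> space M. \<forall>i<k1. ncount (PP \<omega>) (A1 i) \<in> B1 i} \<inter>
               {\<omega> \<in> space M. \<forall>i<k2. ncount (PP \<omega>) (A2 i) \<in> B2 i}) =
         prob {\<omega> \<in> space M. \<forall>i<k1. ncount (PP \<omega>) (A1 i) \<in> B1 i} *
         prob {\<omega> \<in> space M. \<forall>i<k2. ncount (PP \<omega>) (A2 i) \<in> B2 i}"
proof -
  define cod1 :: "bool list \<Rightarrow> nat" where "cod1 bl = to_nat (Inl bl :: bool list + bool list)" for bl
  define cod2 :: "bool list \<Rightarrow> nat" where "cod2 bl = to_nat (Inr bl :: bool list + bool list)" for bl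
  define Df where "Df j = (case from_nat j :: bool list + bool list of
      Inl bl \<Rightarrow> atom A1 k1 bl | Inr bl \<Rightarrow> atom A2 k2 bl)" for j
  define J where "J = cod1 ` BL k1"
  define K where "K = cod2 ` BL k2"
  have Df1: "Df (cod1 bl) = atom A1 k1 bl" for bl unfolding Df_def cod1_def by simp
  have Df2: "Df (cod2 bl) = atom A2 k2 bl" for bl unfolding Df_def cod2_def by simp
  have inj1: "cod1 a = cod1 b \<Longrightarrow> a = b" for a b
    unfolding cod1_def by (metis from_nat_to_nat sum.inject(1))
  have inj2: "cod2 a = cod2 b \<Longrightarrow> a = b" for a b
    unfolding cod2_def by (metis from_nat_to_nat sum.inject(2))
  have inj12: "cod1 a \<noteq> cod2 b" for a b
    unfolding cod1_def cod2_def by (metis from_nat_to_nat sum.distinct(1))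
  have JK: "J \<inter> K = {}" unfolding J_def K_def using inj12 by auto
  have fin: "finite (J \<union> K)" "finite J" "finite K" unfolding J_def K_def using finite_BL by auto
  have sub1: "\<forall>i<k1. A1 i \<subseteq> tlines" using A1 ls_sub by blast
  have sub2: "\<forall>i<k2. A2 i \<subseteq> tlines" using A2 ls_sub by blast
  have meas: "\<forall>j\<in>J \<union> K. Df j \<in> sets lines_space"
    unfolding J_def K_def using Df1 Df2 atom_meas A1 A2 by auto
  have disj: "disjoint_family_on Df (J \<union> K)"
  proof (unfold disjoint_family_on_def, intro ballI impI)
    fix m n assume m: "m \<in> J \<union> K" and n: "n \<in> J \<union> K" and mn: "m \<noteq> n"
    show "Df m \<inter> Df n = {}"
    proof (cases "m \<in> J")
      case mJ: True
      then obtain a where a: "a \<in> BL k1" "m = cod1 a" unfolding J_def by auto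
      show ?thesis
      proof (cases "n \<in> J")
        case True
        then obtain b where b: "b \<in> BL k1" "n = cod1 b" unfolding J_def by auto
        have "a \<noteq> b" using a b mn by auto
        then show ?thesis using a b Df1 atom_disj[of a k1 b A1] unfolding BL_def by auto
      next
        case False
        then obtain b where b: "b \<in> BL k2" "n = cod2 b" using n unfolding K_def by auto
        have "Df m \<subseteq> R1" using a Df1 atom_sub[of a k1 A1 R1] A1 by auto
        moreover have "Df n \<subseteq> R2" using b Df2 atom_sub[of b k2 A2 R2] A2 by auto
        ultimately show ?thesis using R by auto
      qed
    next
      case False
      then obtain a where a: "a \<in> BL k2" "m = cod2 a" using m unfolding K_def by auto
      show ?thesis
      proof (cases "n \<in> J")
        case True
        then obtain b where b: "b \<in> BL k1" "n = cod1 b" unfolding J_def by auto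
        have "Df n \<subseteq> R1" using b Df1 atom_sub[of b k1 A1 R1] A1 by auto
        moreover have "Df m \<subseteq> R2" using a Df2 atom_sub[of a k2 A2 R2] A2 by auto
        ultimately show ?thesis using R by auto
      next
        case False
        then obtain b where b: "b \<in> BL k2" "n = cod2 b" using n unfolding K_def by auto
        have "a \<noteq> b" using a b mn by auto
        then show ?thesis using a b Df2 atom_disj[of a k2 b A2] unfolding BL_def by auto
      qed
    qed
  qed
  have ind: "indep_vars (\<lambda>_. count_space UNIV) (\<lambda>j \<omega>. ncount (PP \<omega>) (Df j)) (J \<union> K)"
    by (rule N_indep[OF fin(1) meas disj])
  define X where "X \<omega> = restrict (\<lambda>j. ncount (PP \<omega>) (Df j)) J" for \<omega>
  define Y where "Y \<omega> = restrict (\<lambda>j. ncount (PP \<omega>) (Df j)) K" for \<omega>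
  have iv: "indep_var (PiM J (\<lambda>_. count_space UNIV)) X (PiM K (\<lambda>_. count_space UNIV)) Y"
    unfolding X_def Y_def by (rule indep_var_restrict[OF ind JK]) auto
  have PJ: "PiM J (\<lambda>_. count_space (UNIV :: enat set)) = count_space (PiE J (\<lambda>_. UNIV))"
    by (rule count_space_PiM_finite) (auto simp: fin)
  have PK: "PiM K (\<lambda>_. count_space (UNIV :: enat set)) = count_space (PiE K (\<lambda>_. UNIV))"
    by (rule count_space_PiM_finite) (auto simp: fin)
  define S1 where "S1 = {f \<in> PiE J (\<lambda>_. UNIV). \<forall>i<k1. (\<Sum>bl\<in>{bl\<in>BL k1. bl ! i}. f (cod1 bl)) \<in> B1 i}"
  define S2 where "S2 = {f \<in> PiE K (\<lambda>_. UNIV). \<forall>i<k2. (\<Sum>bl\<in>{bl\<in>BL k2. bl ! i}. f (cod2 bl)) \<in> B2 i}"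
  have BLfin: "finite {bl\<in>BL k. bl ! i}" for k i
    using finite_BL[of k] by (rule rev_finite_subset) auto
  have BLdisj: "disjoint_family_on (atom A k) {bl\<in>BL k. bl ! i}" for A k i
  proof (unfold disjoint_family_on_def, intro ballI impI)
    fix m n assume m: "m \<in> {bl\<in>BL k. bl ! i}" and n: "n \<in> {bl\<in>BL k. bl ! i}" and mn: "m \<noteq> n"
    show "atom A k m \<inter> atom A k n = {}" by (rule atom_disj) (use m n mn in \<open>auto simp: BL_def\<close>)
  qed
  have cnt1: "ncount (PP \<omega>) (A1 i) = (\<Sum>bl\<in>{bl\<in>BL k1. bl ! i}. X \<omega> (cod1 bl))" if "i < k1" for i \<omega>
  proof -
    have "ncount (PP \<omega>) (A1 i) = ncount (PP \<omega>) (\<Union>bl\<in>{bl\<in>BL k1. bl ! i}. atom A1 k1 bl)"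
      using atom_cover[OF that sub1] by simp
    also have "\<dots> = (\<Sum>bl\<in>{bl\<in>BL k1. bl ! i}. ncount (PP \<omega>) (atom A1 k1 bl))"
      by (rule ncount_UN[OF BLfin BLdisj])
    also have "\<dots> = (\<Sum>bl\<in>{bl\<in>BL k1. bl ! i}. X \<omega> (cod1 bl))"
      by (rule sum.cong) (auto simp: X_def J_def Df1)
    finally show ?thesis .
  qed
  have cnt2: "ncount (PP \<omega>) (A2 i) = (\<Sum>bl\<in>{bl\<in>BL k2. bl ! i}. Y \<omega> (cod2 bl))" if "i < k2" for i \<omega>
  proof -
    have "ncount (PP \<omega>) (A2 i) = ncount (PP \<omega>) (\<Union>bl\<in>{bl\<in>BL k2. bl ! i}. atom A2 k2 bl)"
      using atom_cover[OF that sub2] by simp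
    also have "\<dots> = (\<Sum>bl\<in>{bl\<in>BL k2. bl ! i}. ncount (PP \<omega>) (atom A2 k2 bl))"
      by (rule ncount_UN[OF BLfin BLdisj])
    also have "\<dots> = (\<Sum>bl\<in>{bl\<in>BL k2. bl ! i}. Y \<omega> (cod2 bl))"
      by (rule sum.cong) (auto simp: Y_def K_def Df2)
    finally show ?thesis .
  qed
  have XP: "X \<omega> \<in> PiE J (\<lambda>_. UNIV)" for \<omega> unfolding X_def by auto
  have YP: "Y \<omega> \<in> PiE K (\<lambda>_. UNIV)" for \<omega> unfolding Y_def by auto
  have G1: "{\<omega> \<in> space M. \<forall>i<k1. ncount (PP \<omega>) (A1 i) \<in> B1 i} = X -` S1 \<inter> space M"
    unfolding S1_def using cnt1 XP by auto
  have G2: "{\<omega> \<in> space M. \<forall>i<k2. ncount (PP \<omega>) (A2 i) \<in> B2 i} = Y -` S2 \<inter> space M"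
    unfolding S2_def using cnt2 YP by auto
  have G12: "(X -` S1 \<inter> space M) \<inter> (Y -` S2 \<inter> space M) = (\<lambda>x. (X x, Y x)) -` (S1 \<times> S2) \<inter> space M"
    by auto
  have s1: "S1 \<in> sets (PiM J (\<lambda>_. count_space UNIV))" unfolding PJ S1_def by auto
  have s2: "S2 \<in> sets (PiM K (\<lambda>_. count_space UNIV))" unfolding PK S2_def by auto
  show ?thesis unfolding G1 G2 G12 by (rule indep_varD[OF iv s1 s2])
qed

end

definition GR :: "'w measure \<Rightarrow> ('w \<Rightarrow> nat list set set) \<Rightarrow> nat list set set \<Rightarrow> 'w measure" where
  "GR M PP R = sigma (space M)
     {(\<lambda>\<omega>. ncount (PP \<omega>) A) -` B \<inter> space M | A B. A \<in> sets lines_space \<and> A \<subseteq> R}"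

lemma Fn_GR: "Fn M PP n = GR M PP (lines_meeting_ball n)"
  unfolding Fn_def GR_def by (rule refl)

lemma GenD: "a \<in> Gen M PP R \<Longrightarrow> \<exists>k A B. a = {\<omega> \<in> space M. \<forall>i<(k::nat). ncount (PP \<omega>) (A i) \<in> B i} \<and>
              (\<forall>i<k. A i \<in> sets lines_space \<and> A i \<subseteq> R)"
  unfolding Gen_def by (simp only: mem_Collect_eq)

lemma GenE:
  assumes "a \<in> Gen M PP R"
  obtains k A B where "a = {\<omega> \<in> space M. \<forall>i<(k::nat). ncount (PP \<omega>) (A i) \<in> B i}"
    "\<forall>i<k. A i \<in> sets lines_space \<and> A i \<subseteq> R"
proof -
  from GenD[OF assms] show ?thesis
  proof (elim exE conjE)
    fix k A B assume "a = {\<omega> \<in> space M. \<forall>i<(k::nat). ncount (PP \<omega>) (A i) \<in> B i}"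
      "\<forall>i<k. A i \<in> sets lines_space \<and> A i \<subseteq> R"
    then show ?thesis by (rule that)
  qed
qed

lemma GenI: "(\<forall>i<k. A i \<in> sets lines_space \<and> A i \<subseteq> R) \<Longrightarrow>
   {\<omega> \<in> space M. \<forall>i<(k::nat). ncount (PP \<omega>) (A i) \<in> B i} \<in> Gen M PP R"
  unfolding Gen_def mem_Collect_eq by (rule exI[of _ k], rule exI[of _ A], rule exI[of _ B]) simp

lemma all_split: "(\<forall>i<k1 + k2. (if i < k1 then P i else Q (i - k1))) \<longleftrightarrow> (\<forall>i<k1. P i) \<and> (\<forall>i<(k2::nat). Q i)"
proof
  assume h: "\<forall>i<k1 + k2. (if i < k1 then P i else Q (i - k1))"
  have "P i" if "i < k1" for i using h[rule_format, of i] that by simp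
  moreover have "Q i" if "i < k2" for i using h[rule_format, of "i + k1"] that by simp
  ultimately show "(\<forall>i<k1. P i) \<and> (\<forall>i<k2. Q i)" by blast
next
  assume h: "(\<forall>i<k1. P i) \<and> (\<forall>i<k2. Q i)"
  show "\<forall>i<k1 + k2. (if i < k1 then P i else Q (i - k1))"
  proof (intro allI impI)
    fix i assume "i < k1 + k2"
    then show "if i < k1 then P i else Q (i - k1)" using h by (cases "i < k1") auto
  qed
qed

lemma Gen_Int_stable: "Int_stable (Gen M PP R)"
  unfolding Int_stable_def
proof (intro ballI)
  fix a b assume a: "a \<in> Gen M PP R" and b: "b \<in> Gen M PP R"
  obtain k1 A1 B1 where a1: "a = {\<omega> \<in> space M. \<forall>i<(k1::nat). ncount (PP \<omega>) (A1 i) \<in> B1 i}"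
    and a2: "\<forall>i<k1. A1 i \<in> sets lines_space \<and> A1 i \<subseteq> R" by (rule GenE[OF a])
  obtain k2 A2 B2 where b1: "b = {\<omega> \<in> space M. \<forall>i<(k2::nat). ncount (PP \<omega>) (A2 i) \<in> B2 i}"
    and b2: "\<forall>i<k2. A2 i \<in> sets lines_space \<and> A2 i \<subseteq> R" by (rule GenE[OF b])
  define A where "A i = (if i < k1 then A1 i else A2 (i - k1))" for i
  define B where "B i = (if i < k1 then B1 i else B2 (i - k1))" for i
  have eq: "(ncount (PP \<omega>) (A i) \<in> B i) = (if i < k1 then ncount (PP \<omega>) (A1 i) \<in> B1 i else ncount (PP \<omega>) (A2 (i - k1)) \<in> B2 (i - k1))" for i \<omega>
    unfolding A_def B_def by simp
  have "(\<forall>i<k1+k2. ncount (PP \<omega>) (A i) \<in> B i) \<longleftrightarrow>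
      (\<forall>i<k1. ncount (PP \<omega>) (A1 i) \<in> B1 i) \<and> (\<forall>i<k2. ncount (PP \<omega>) (A2 i) \<in> B2 i)" for \<omega>
    unfolding eq by (rule all_split)
  then have ab: "a \<inter> b = {\<omega> \<in> space M. \<forall>i<k1 + k2. ncount (PP \<omega>) (A i) \<in> B i}"
    unfolding a1 b1 by blast
  have "\<forall>i<k1 + k2. A i \<in> sets lines_space \<and> A i \<subseteq> R"
  proof (intro allI impI)
    fix i assume i: "i < k1 + k2"
    show "A i \<in> sets lines_space \<and> A i \<subseteq> R"
    proof (cases "i < k1")
      case True then show ?thesis unfolding A_def using a2 by simp
    next
      case False then have "i - k1 < k2" using i by simp
      then show ?thesis unfolding A_def using a2 b2 False by simp
    qed
  qed
  then show "a \<inter> b \<in> Gen M PP R" unfolding ab by (rule GenI)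
qed

context PPs
begin

lemma GR_sub_Gen: "sets (GR M PP R) \<subseteq> sigma_sets (space M) (Gen M PP R)"
proof -
  let ?G = "{(\<lambda>\<omega>. ncount (PP \<omega>) A) -` B \<inter> space M | A B. A \<in> sets lines_space \<and> A \<subseteq> R}"
  have e: "sets (GR M PP R) = sigma_sets (space M) ?G"
    unfolding GR_def by (rule sets_measure_of) blast
  have "?G \<subseteq> Gen M PP R"
  proof
    fix x assume "x \<in> ?G"
    then have "\<exists>A B. x = (\<lambda>\<omega>. ncount (PP \<omega>) A) -` B \<inter> space M \<and> A \<in> sets lines_space \<and> A \<subseteq> R"
      by (simp only: mem_Collect_eq)
    then obtain A B where x: "x = (\<lambda>\<omega>. ncount (PP \<omega>) A) -` B \<inter> space M"
      and A: "A \<in> sets lines_space" "A \<subseteq> R" by (elim exE conjE) (rule that)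
    have x2: "x = {\<omega> \<in> space M. \<forall>i<(1::nat). ncount (PP \<omega>) ((\<lambda>_. A) i) \<in> (\<lambda>_. B) i}"
      unfolding x by auto
    have "{\<omega> \<in> space M. \<forall>i<(1::nat). ncount (PP \<omega>) ((\<lambda>_. A) i) \<in> (\<lambda>_. B) i} \<in> Gen M PP R"
      by (rule GenI) (simp add: A)
    then show "x \<in> Gen M PP R" unfolding x2 .
  qed
  then have "sigma_sets (space M) ?G \<subseteq> sigma_sets (space M) (Gen M PP R)" by (rule sigma_sets_subseteq)
  then show ?thesis unfolding e .
qed

lemma GR_events: "sets (GR M PP R) \<subseteq> events"
proof -
  have "sigma_sets (space M) (Gen M PP R) \<subseteq> events"
    by (rule sets.sigma_sets_subset) (rule Gen_events)
  then show ?thesis using GR_sub_Gen by blast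
qed

lemma space_GR: "space (GR M PP R) = space M"
  unfolding GR_def by (simp add: space_measure_of_conv)

lemma indep_Gen:
  assumes R: "R1 \<inter> R2 = {}"
  shows "indep_set (Gen M PP R1) (Gen M PP R2)"
proof (rule indep_setI)
  show "Gen M PP R1 \<subseteq> events" "Gen M PP R2 \<subseteq> events" by (rule Gen_events)+
next
  fix a b assume a: "a \<in> Gen M PP R1" and b: "b \<in> Gen M PP R2"
  obtain k1 A1 B1 where a1: "a = {\<omega> \<in> space M. \<forall>i<(k1::nat). ncount (PP \<omega>) (A1 i) \<in> B1 i}"
    and a2: "\<forall>i<k1. A1 i \<in> sets lines_space \<and> A1 i \<subseteq> R1" by (rule GenE[OF a])
  obtain k2 A2 B2 where b1: "b = {\<omega> \<in> space M. \<forall>i<(k2::nat). ncount (PP \<omega>) (A2 i) \<in> B2 i}"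
    and b2: "\<forall>i<k2. A2 i \<in> sets lines_space \<and> A2 i \<subseteq> R2" by (rule GenE[OF b])
  show "prob (a \<inter> b) = prob a * prob b" unfolding a1 b1 by (rule core_indep[OF R a2 b2])
qed

lemma indep_region:
  assumes R: "R1 \<inter> R2 = {}" and a: "a \<in> sets (GR M PP R1)" and b: "b \<in> sets (GR M PP R2)"
  shows "prob (a \<inter> b) = prob a * prob b"
proof -
  have i1: "indep_sets (case_bool (Gen M PP R1) (Gen M PP R2)) UNIV"
    using indep_Gen[OF R] unfolding indep_set_def .
  have i2: "indep_sets (\<lambda>i. sigma_sets (space M) (case_bool (Gen M PP R1) (Gen M PP R2) i)) UNIV"
    by (rule indep_sets_sigma[OF i1]) (auto split: bool.split intro: Gen_Int_stable)
  have "(\<lambda>i. sigma_sets (space M) (case_bool (Gen M PP R1) (Gen M PP R2) i)) =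
        case_bool (sigma_sets (space M) (Gen M PP R1)) (sigma_sets (space M) (Gen M PP R2))"
    by (rule ext) (simp split: bool.split)
  then have "indep_set (sigma_sets (space M) (Gen M PP R1)) (sigma_sets (space M) (Gen M PP R2))"
    using i2 unfolding indep_set_def by simp
  moreover have "a \<in> sigma_sets (space M) (Gen M PP R1)" using a GR_sub_Gen by blast
  moreover have "b \<in> sigma_sets (space M) (Gen M PP R2)" using b GR_sub_Gen by blast
  ultimately show ?thesis by (rule indep_setD)
qed

lemma GR_mono: "R1 \<subseteq> R2 \<Longrightarrow> sets (GR M PP R1) \<subseteq> sets (GR M PP R2)"
proof -
  assume s: "R1 \<subseteq> R2"
  let ?G = "\<lambda>R. {(\<lambda>\<omega>. ncount (PP \<omega>) A) -` B \<inter> space M | A B. A \<in> sets lines_space \<and> A \<subseteq> R}"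
  have e: "sets (GR M PP R) = sigma_sets (space M) (?G R)" for R
    unfolding GR_def by (rule sets_measure_of) blast
  have "?G R1 \<subseteq> ?G R2"
  proof
    fix x assume "x \<in> ?G R1"
    then have "\<exists>A B. x = (\<lambda>\<omega>. ncount (PP \<omega>) A) -` B \<inter> space M \<and> A \<in> sets lines_space \<and> A \<subseteq> R1"
      by (simp only: mem_Collect_eq)
    then obtain A B where x: "x = (\<lambda>\<omega>. ncount (PP \<omega>) A) -` B \<inter> space M"
      and A: "A \<in> sets lines_space" "A \<subseteq> R1" by (elim exE conjE) (rule that)
    show "x \<in> ?G R2"
      unfolding mem_Collect_eq by (rule exI[of _ A], rule exI[of _ B]) (use x A s in auto)
  qed
  then show ?thesis unfolding e by (rule sigma_sets_subseteq)
qed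

lemma N_meas_GR:
  assumes "A \<in> sets lines_space" "A \<subseteq> R"
  shows "(\<lambda>\<omega>. ncount (PP \<omega>) A) \<in> measurable (GR M PP R) (count_space UNIV)"
proof -
  let ?G = "{(\<lambda>\<omega>. ncount (PP \<omega>) A) -` B \<inter> space M | A B. A \<in> sets lines_space \<and> A \<subseteq> R}"
  have e: "sets (GR M PP R) = sigma_sets (space M) ?G"
    unfolding GR_def by (rule sets_measure_of) blast
  show ?thesis
  proof (rule measurableI)
    fix x assume "x \<in> space (GR M PP R)" then show "ncount (PP x) A \<in> space (count_space UNIV)" by simp
  next
    fix B assume "B \<in> sets (count_space (UNIV :: enat set))"
    have "(\<lambda>\<omega>. ncount (PP \<omega>) A) -` B \<inter> space M \<in> ?G"
      unfolding mem_Collect_eq by (rule exI[of _ A], rule exI[of _ B]) (simp add: assms)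
    then have "(\<lambda>\<omega>. ncount (PP \<omega>) A) -` B \<inter> space M \<in> sets (GR M PP R)" unfolding e by blast
    then show "(\<lambda>\<omega>. ncount (PP \<omega>) A) -` B \<inter> space (GR M PP R) \<in> sets (GR M PP R)"
      unfolding space_GR .
  qed
qed

lemma subalg_GR: "subalgebra M (GR M PP R)"
  unfolding subalgebra_def using space_GR GR_events by blast

end

definition Vd :: "nat \<Rightarrow> nat list set" where "Vd m = {x \<in> tverts. length x = m}"
definition Lv :: "nat list \<Rightarrow> nat list set set" where "Lv v = {l \<in> tlines. v \<in> l}"
definition survS :: "nat list set set \<Rightarrow> nat \<Rightarrow> nat list set" where
  "survS P m = {x \<in> Vd m. \<forall>j\<le>m. \<forall>l\<in>P. take j x \<notin> l}"

lemma tverts_lt3: "x \<in> tverts \<Longrightarrow> set x \<subseteq> {..<3}"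
  unfolding tverts_def by (cases x) auto

lemma finite_Vd: "finite (Vd m)"
proof -
  have "Vd m \<subseteq> {xs. set xs \<subseteq> {..<3} \<and> length xs = m}" unfolding Vd_def using tverts_lt3 by blast
  moreover have "finite {xs. set xs \<subseteq> {..<(3::nat)} \<and> length xs = m}" by (rule finite_lists_length_eq) simp
  ultimately show ?thesis by (rule finite_subset)
qed

lemma finite_survS: "finite (survS P m)"
  unfolding survS_def using finite_Vd by simp

lemma survS_sub: "survS P m \<subseteq> Vd m" unfolding survS_def by blast

lemma seg_disj: assumes "x \<in> tverts"
  shows "(l \<inter> tsegment troot x = {}) \<longleftrightarrow> (\<forall>j\<le>length x. take j x \<notin> l)"
  unfolding tsegment_root[OF assms] by blast

lemma Z_eq: "Zcount P m = card (survS P m)"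
proof -
  have "{x \<in> tverts. tdist troot x = m \<and> (\<forall>l\<in>P. l \<inter> tsegment troot x = {})} = survS P m"
  proof (rule set_eqI)
    fix x
    show "x \<in> {x \<in> tverts. tdist troot x = m \<and> (\<forall>l\<in>P. l \<inter> tsegment troot x = {})} \<longleftrightarrow> x \<in> survS P m"
    proof (cases "x \<in> tverts")
      case True
      then show ?thesis unfolding survS_def Vd_def mem_Collect_eq using tdist_root[OF True] seg_disj[OF True]
        by auto
    next
      case False
      then show ?thesis unfolding survS_def Vd_def by blast
    qed
  qed
  then show ?thesis unfolding Zcount_def by simp
qed

lemma take_snoc_le: "j \<le> length x \<Longrightarrow> take j (x @ [a]) = take j x"
  by simp

lemma surv_snoc:
  assumes x: "x \<in> Vd n" and n: "n \<ge> 1" and a: "a < 2" and P: "P \<subseteq> tlines"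
  shows "x @ [a] \<in> survS P (Suc n) \<longleftrightarrow> x \<in> survS P n \<and> P \<inter> Ec (x @ [a]) = {}"
proof -
  have xt: "x \<in> tverts" and lx: "length x = n" using x unfolding Vd_def by auto
  have xne: "x \<noteq> []" using lx n by auto
  have ct: "x @ [a] \<in> tverts" using tverts_snoc[OF xt xne a] .
  have cV: "x @ [a] \<in> Vd (Suc n)" unfolding Vd_def using ct lx by simp
  have split: "(\<forall>j\<le>Suc n. \<forall>l\<in>P. take j (x @ [a]) \<notin> l) \<longleftrightarrow>
      (\<forall>j\<le>n. \<forall>l\<in>P. take j x \<notin> l) \<and> (\<forall>l\<in>P. x @ [a] \<notin> l)"
  proof
    assume h: "\<forall>j\<le>Suc n. \<forall>l\<in>P. take j (x @ [a]) \<notin> l"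
    have "\<forall>j\<le>n. \<forall>l\<in>P. take j x \<notin> l"
    proof (intro allI impI ballI)
      fix j l assume "j \<le> n" "l \<in> P"
      then show "take j x \<notin> l" using h[rule_format, of j l] lx by simp
    qed
    moreover have "\<forall>l\<in>P. x @ [a] \<notin> l" using h[rule_format, of "Suc n"] lx by simp
    ultimately show "(\<forall>j\<le>n. \<forall>l\<in>P. take j x \<notin> l) \<and> (\<forall>l\<in>P. x @ [a] \<notin> l)" by blast
  next
    assume h: "(\<forall>j\<le>n. \<forall>l\<in>P. take j x \<notin> l) \<and> (\<forall>l\<in>P. x @ [a] \<notin> l)"
    show "\<forall>j\<le>Suc n. \<forall>l\<in>P. take j (x @ [a]) \<notin> l"
    proof (intro allI impI ballI)
      fix j l assume j: "j \<le> Suc n" and l: "l \<in> P"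
      show "take j (x @ [a]) \<notin> l"
      proof (cases "j = Suc n")
        case True then show ?thesis using h l lx by simp
      next
        case False then have "j \<le> n" using j by simp
        then show ?thesis using h l lx by simp
      qed
    qed
  qed
  have key: "(\<forall>j\<le>n. \<forall>l\<in>P. take j x \<notin> l) \<Longrightarrow> (\<forall>l\<in>P. x @ [a] \<notin> l) \<longleftrightarrow> P \<inter> Ec (x @ [a]) = {}"
  proof
    assume h: "\<forall>l\<in>P. x @ [a] \<notin> l"
    show "P \<inter> Ec (x @ [a]) = {}"
    proof (rule equals0I)
      fix l assume "l \<in> P \<inter> Ec (x @ [a])"
      then have l: "l \<in> P" "l \<in> Ec (x @ [a])" by auto
      have "x @ [a] \<in> l" using Ec_min[OF l(2)] by (rule conjunct1)
      then show False using h l(1) by blast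
    qed
  next
    assume s: "\<forall>j\<le>n. \<forall>l\<in>P. take j x \<notin> l" and e: "P \<inter> Ec (x @ [a]) = {}"
    show "\<forall>l\<in>P. x @ [a] \<notin> l"
    proof
      fix l assume l: "l \<in> P"
      show "x @ [a] \<notin> l"
      proof
        assume c: "x @ [a] \<in> l"
        have "x \<notin> l" using s[rule_format, of n l] l lx by simp
        then have "butlast (x @ [a]) \<notin> l" by simp
        moreover have "l \<in> tlines" using P l by blast
        moreover have "x @ [a] \<noteq> []" by simp
        ultimately have "l \<in> Ec (x @ [a])" using Ec_cover[of l "x @ [a]"] c by blast
        then show False using e l by blast
      qed
    qed
  qed
  have xs: "x \<in> survS P n \<longleftrightarrow> (\<forall>j\<le>n. \<forall>l\<in>P. take j x \<notin> l)"
    unfolding survS_def using x by blast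
  have cs: "x @ [a] \<in> survS P (Suc n) \<longleftrightarrow> (\<forall>j\<le>Suc n. \<forall>l\<in>P. take j (x @ [a]) \<notin> l)"
    unfolding survS_def using cV by blast
  show ?thesis unfolding cs xs split using key by blast
qed

lemma Vd_Suc_decomp:
  assumes "c \<in> Vd (Suc n)" "n \<ge> 1"
  shows "butlast c \<in> Vd n \<and> last c < 2 \<and> c = butlast c @ [last c]"
proof -
  have ct: "c \<in> tverts" and lc: "length c = Suc n" using assms unfolding Vd_def by auto
  have cne: "c \<noteq> []" using lc by auto
  have e: "c = butlast c @ [last c]" using cne by simp
  have "length (butlast c) = n" using lc by simp
  then have bne: "butlast c \<noteq> []" using assms(2) by (metis One_nat_def list.size(3) not_one_le_zero)
  have "butlast c @ [last c] \<in> tverts" using ct e by simp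
  then have "butlast c \<in> tverts \<and> last c < 2" using tverts_snoc_iff[OF bne] by blast
  then show ?thesis using e lc unfolding Vd_def by simp
qed

lemma card_lt2: "card {a::nat. a < 2 \<and> Q a} = (if Q 0 then 1 else 0) + (if Q 1 then 1 else 0)"
proof -
  have e: "{a::nat. a < 2 \<and> Q a} = (if Q 0 then {0} else {}) \<union> (if Q 1 then {1} else {})"
  proof (rule set_eqI)
    fix a :: nat
    show "a \<in> {a::nat. a < 2 \<and> Q a} \<longleftrightarrow> a \<in> (if Q 0 then {0} else {}) \<union> (if Q 1 then {1} else {})"
    proof (cases "a = 0")
      case True then show ?thesis by simp
    next
      case False
      then show ?thesis by (cases "a = 1") auto
    qed
  qed
  show ?thesis unfolding e by (cases "Q 0"; cases "Q 1") auto
qed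

lemma Z_Suc:
  assumes P: "P \<subseteq> tlines" and n: "n \<ge> 1"
  shows "Zcount P (Suc n) = (\<Sum>x\<in>survS P n. (if P \<inter> Ec (x @ [0]) = {} then 1 else 0) +
                                              (if P \<inter> Ec (x @ [1]) = {} then 1 else 0))"
proof -
  let ?S = "SIGMA x:survS P n. {a. a < 2 \<and> P \<inter> Ec (x @ [a]) = {}}"
  have eq: "survS P (Suc n) = (\<lambda>(x, a). x @ [a]) ` ?S"
  proof (rule set_eqI)
    fix c show "c \<in> survS P (Suc n) \<longleftrightarrow> c \<in> (\<lambda>(x, a). x @ [a]) ` ?S"
    proof
      assume c: "c \<in> survS P (Suc n)"
      then have cV: "c \<in> Vd (Suc n)" using survS_sub by blast
      note d = Vd_Suc_decomp[OF cV n]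
      have s1: "butlast c @ [last c] \<in> survS P (Suc n)" using c d by simp
      have s2: "butlast c \<in> survS P n \<and> P \<inter> Ec (butlast c @ [last c]) = {}"
        using iffD1[OF surv_snoc[of "butlast c" n "last c" P] s1] d n P by blast
      have "(butlast c, last c) \<in> ?S" unfolding mem_Sigma_iff mem_Collect_eq using s2 d by simp
      moreover have "c = (\<lambda>(x, a). x @ [a]) (butlast c, last c)" using d by simp
      ultimately show "c \<in> (\<lambda>(x, a). x @ [a]) ` ?S" by (rule rev_image_eqI)
    next
      assume "c \<in> (\<lambda>(x, a). x @ [a]) ` ?S"
      then obtain p where p: "p \<in> ?S" "c = (\<lambda>(x, a). x @ [a]) p" by (rule imageE)
      obtain x a where pxa: "p = (x, a)" by (cases p)
      have x: "x \<in> survS P n" and a: "a < 2" "P \<inter> Ec (x @ [a]) = {}"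
        using p(1) unfolding pxa mem_Sigma_iff mem_Collect_eq by simp_all
      have c: "c = x @ [a]" using p(2) pxa by simp
      have xV: "x \<in> Vd n" using x survS_sub by blast
      have "x @ [a] \<in> survS P (Suc n)" using iffD2[OF surv_snoc[OF xV n a(1) P]] x a(2) by blast
      then show "c \<in> survS P (Suc n)" unfolding c .
    qed
  qed
  have inj: "inj_on (\<lambda>(x, a). x @ [a]) ?S" by (rule inj_onI) auto
  have "Zcount P (Suc n) = card ?S" unfolding Z_eq eq using card_image[OF inj] .
  also have "\<dots> = (\<Sum>x\<in>survS P n. card {a. a < 2 \<and> P \<inter> Ec (x @ [a]) = {}})"
    by (rule card_SigmaI) (simp_all add: finite_survS)
  also have "\<dots> = (\<Sum>x\<in>survS P n. (if P \<inter> Ec (x @ [0]) = {} then 1 else 0) +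
                                              (if P \<inter> Ec (x @ [1]) = {} then 1 else 0))"
    by (rule sum.cong) (simp_all only: card_lt2)
  finally show ?thesis .
qed


definition Ball :: "nat \<Rightarrow> nat list set" where "Ball m = {v \<in> tverts. length v \<le> m}"

lemma finite_Ball: "finite (Ball m)"
proof -
  have "Ball m \<subseteq> (\<Union>i\<le>m. Vd i)" unfolding Ball_def Vd_def by blast
  moreover have "finite (\<Union>i\<le>m. Vd i)" using finite_Vd by blast
  ultimately show ?thesis by (rule finite_subset)
qed

lemma Lv_meas: "v \<in> tverts \<Longrightarrow> Lv v \<in> sets lines_space"
proof -
  assume v: "v \<in> tverts"
  have "Lv v \<in> {{l \<in> tlines. x \<in> l} | x. x \<in> tverts}" unfolding Lv_def using v by blast
  then show ?thesis unfolding sets_lines_space by (rule sigma_sets.Basic)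
qed

lemma Lv_ball: "v \<in> tverts \<Longrightarrow> length v \<le> n \<Longrightarrow> Lv v \<subseteq> lines_meeting_ball n"
proof
  fix l assume v: "v \<in> tverts" "length v \<le> n" and l: "l \<in> Lv v"
  have "tdist troot v \<le> n" using tdist_root[OF v(1)] v(2) by simp
  then show "l \<in> lines_meeting_ball n" using l unfolding Lv_def lines_meeting_ball_def by blast
qed

lemma Ec_Lv: "Ec c = Lv (c @ [0]) \<inter> Lv (c @ [1])"
  unfolding Ec_def Lv_def by blast

lemma Ec_meas: "c \<in> tverts \<Longrightarrow> c \<noteq> [] \<Longrightarrow> Ec c \<in> sets lines_space"
proof -
  assume c: "c \<in> tverts" "c \<noteq> []"
  have "c @ [0] \<in> tverts" "c @ [1] \<in> tverts" using tverts_snoc[OF c] by simp_all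
  then show ?thesis unfolding Ec_Lv using Lv_meas by blast
qed

lemma Ec_ball: "length c = Suc n \<Longrightarrow> Ec c \<inter> lines_meeting_ball n = {}"
proof (rule equals0I)
  fix l assume c: "length c = Suc n" and "l \<in> Ec c \<inter> lines_meeting_ball n"
  then have l: "l \<in> Ec c" "l \<in> lines_meeting_ball n" by auto
  then obtain x where x: "x \<in> l" "tdist troot x \<le> n" unfolding lines_meeting_ball_def by blast
  have "l \<in> tlines" using l(1) unfolding Ec_def by blast
  then obtain g where g: "geod g" "l = range g" unfolding tlines_geod by blast
  have xt: "x \<in> tverts" using g x geod_tverts by blast
  have "length c \<le> length x" using Ec_min[OF l(1)] x(1) by blast
  then show False using x(2) tdist_root[OF xt] c by simp
qed

lemma Ec_disj: "length c = length c' \<Longrightarrow> c \<noteq> c' \<Longrightarrow> Ec c \<inter> Ec c' = {}"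
proof (rule equals0I)
  fix l assume e: "length c = length c'" "c \<noteq> c'" and "l \<in> Ec c \<inter> Ec c'"
  then have l: "l \<in> Ec c" "l \<in> Ec c'" by auto
  have "c' \<in> l" using Ec_min[OF l(2)] by (rule conjunct1)
  then have "length c' = length c \<longrightarrow> c' = c" using Ec_min[OF l(1)] by blast
  then show False using e by simp
qed

context PPs
begin

lemma FD_meas:
  fixes J :: "'j set" and Af :: "'j \<Rightarrow> nat list set set" and h :: "('j \<Rightarrow> enat) \<Rightarrow> 'b"
  assumes J: "finite J" and A: "\<forall>j\<in>J. Af j \<in> sets lines_space \<and> Af j \<subseteq> R"
  shows "(\<lambda>\<omega>. h (restrict (\<lambda>j. ncount (PP \<omega>) (Af j)) J)) \<in> measurable (GR M PP R) (count_space UNIV)"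
proof -
  have m: "(\<lambda>\<omega>. restrict (\<lambda>j. ncount (PP \<omega>) (Af j)) J) \<in> measurable (GR M PP R) (PiM J (\<lambda>_. count_space UNIV))"
  proof (rule measurable_restrict)
    fix j assume "j \<in> J"
    then have "Af j \<in> sets lines_space" "Af j \<subseteq> R" using A by auto
    then show "(\<lambda>\<omega>. ncount (PP \<omega>) (Af j)) \<in> measurable (GR M PP R) (count_space UNIV)" by (rule N_meas_GR)
  qed
  have P: "PiM J (\<lambda>_. count_space (UNIV :: enat set)) = count_space (PiE J (\<lambda>_. UNIV))"
    by (rule count_space_PiM_finite) (simp_all add: J)
  have hm: "h \<in> measurable (count_space (PiE J (\<lambda>_. UNIV))) (count_space UNIV)" by simp
  show ?thesis using measurable_compose[OF m[unfolded P] hm] by (simp add: comp_def)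
qed

lemma meas_set_GR: "g \<in> measurable (GR M PP R) (count_space UNIV) \<Longrightarrow> {\<omega> \<in> space M. g \<omega> \<in> B} \<in> sets (GR M PP R)"
proof -
  assume g: "g \<in> measurable (GR M PP R) (count_space UNIV)"
  have "g -` B \<inter> space (GR M PP R) \<in> sets (GR M PP R)" by (rule measurable_sets[OF g]) simp
  moreover have "g -` B \<inter> space (GR M PP R) = {\<omega> \<in> space M. g \<omega> \<in> B}" unfolding space_GR by blast
  ultimately show ?thesis by simp
qed

lemma survS_repr:
  assumes w: "\<omega> \<in> space M"
  shows "survS (PP \<omega>) m = (\<lambda>f. {x \<in> Vd m. \<forall>j\<le>m. f (take j x) = 0}) (restrict (\<lambda>v. ncount (PP \<omega>) (Lv v)) (Ball m))"
proof -
  have sub: "PP \<omega> \<subseteq> tlines" by (rule PP_sub[OF w])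
  have "(\<forall>l\<in>PP \<omega>. take j x \<notin> l) \<longleftrightarrow> restrict (\<lambda>v. ncount (PP \<omega>) (Lv v)) (Ball m) (take j x) = 0"
    if x: "x \<in> Vd m" and j: "j \<le> m" for x j
  proof -
    have xt: "x \<in> tverts" and lx: "length x = m" using x unfolding Vd_def by auto
    have "take j x \<in> Ball m" unfolding Ball_def using tverts_take[OF xt] lx by simp
    then have "restrict (\<lambda>v. ncount (PP \<omega>) (Lv v)) (Ball m) (take j x) = ncount (PP \<omega>) (Lv (take j x))" by simp
    moreover have "ncount (PP \<omega>) (Lv (take j x)) = 0 \<longleftrightarrow> (\<forall>l\<in>PP \<omega>. take j x \<notin> l)"
      unfolding ncount_zero Lv_def using sub by blast
    ultimately show ?thesis by simp
  qed
  then show ?thesis unfolding survS_def by blast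
qed

lemma survS_meas:
  assumes "m \<le> n"
  shows "(\<lambda>\<omega>. h (survS (PP \<omega>) m)) \<in> measurable (GR M PP (lines_meeting_ball n)) (count_space UNIV)"
proof -
  have A: "\<forall>v\<in>Ball m. Lv v \<in> sets lines_space \<and> Lv v \<subseteq> lines_meeting_ball n"
  proof
    fix v assume "v \<in> Ball m"
    then have v: "v \<in> tverts" "length v \<le> n" unfolding Ball_def using assms by auto
    show "Lv v \<in> sets lines_space \<and> Lv v \<subseteq> lines_meeting_ball n"
      using Lv_meas[OF v(1)] Lv_ball[OF v] by blast
  qed
  let ?r = "\<lambda>\<omega>. (\<lambda>f. h ({x \<in> Vd m. \<forall>j\<le>m. f (take j x) = 0})) (restrict (\<lambda>v. ncount (PP \<omega>) (Lv v)) (Ball m))"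
  have mm: "?r \<in> measurable (GR M PP (lines_meeting_ball n)) (count_space UNIV)"
    by (rule FD_meas[OF finite_Ball A])
  have eqs: "h (survS (PP \<omega>) m) = ?r \<omega>" if "\<omega> \<in> space (GR M PP (lines_meeting_ball n))" for \<omega>
  proof -
    have "\<omega> \<in> space M" using that unfolding space_GR .
    then show ?thesis using survS_repr by simp
  qed
  have "(\<lambda>\<omega>. h (survS (PP \<omega>) m)) \<in> measurable (GR M PP (lines_meeting_ball n)) (count_space UNIV) \<longleftrightarrow>
        ?r \<in> measurable (GR M PP (lines_meeting_ball n)) (count_space UNIV)"
    by (rule measurable_cong) (rule eqs)
  then show ?thesis using mm by blast
qed

definition Wy :: "nat list \<Rightarrow> 'w \<Rightarrow> nat" where
  "Wy x \<omega> = (if ncount (PP \<omega>) (Ec (x @ [0])) = 0 then 1 else 0) + (if ncount (PP \<omega>) (Ec (x @ [1])) = 0 then 1 else 0)"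

definition Rr :: "nat list set \<Rightarrow> nat list set set" where
  "Rr T = (\<Union>x\<in>T. Ec (x @ [0]) \<union> Ec (x @ [1]))"

lemma W_meas:
  assumes T: "T \<subseteq> Vd n" and n: "n \<ge> 1"
  shows "(\<lambda>\<omega>. \<Sum>x\<in>T. Wy x \<omega>) \<in> measurable (GR M PP (Rr T)) (count_space UNIV)"
proof -
  define J where "J = (\<lambda>(x, a). x @ [a]) ` (T \<times> {0, 1::nat})"
  have fT: "finite T" using T finite_Vd finite_subset by blast
  have fJ: "finite J" unfolding J_def using fT by simp
  have A: "\<forall>j\<in>J. Ec j \<in> sets lines_space \<and> Ec j \<subseteq> Rr T"
  proof
    fix j assume "j \<in> J"
    then obtain p where p: "p \<in> T \<times> {0, 1::nat}" "j = (\<lambda>(x, a). x @ [a]) p" unfolding J_def by (rule imageE)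
    obtain x a where pxa: "p = (x, a)" by (cases p)
    have xa: "x \<in> T" "a \<in> {0, 1::nat}" "j = x @ [a]" using p pxa by auto
    have xt: "x \<in> tverts" "x \<noteq> []" using xa T n unfolding Vd_def by auto
    have "a < 2" using xa by auto
    then have "j \<in> tverts" using tverts_snoc[OF xt] xa by simp
    then have "Ec j \<in> sets lines_space" using Ec_meas xa by simp
    moreover have "Ec j \<subseteq> Ec (x @ [0]) \<union> Ec (x @ [1])" using xa(2,3) by auto
    then have "Ec j \<subseteq> Rr T" unfolding Rr_def using xa(1) by blast
    ultimately show "Ec j \<in> sets lines_space \<and> Ec j \<subseteq> Rr T" by blast
  qed
  define h where "h f = (\<Sum>x\<in>T. (if f (x @ [0]) = (0::enat) then 1 else 0) + (if f (x @ [1]) = 0 then 1 else (0::nat)))" for f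
  have m: "(\<lambda>\<omega>. h (restrict (\<lambda>j. ncount (PP \<omega>) (Ec j)) J)) \<in> measurable (GR M PP (Rr T)) (count_space UNIV)"
    by (rule FD_meas[OF fJ A])
  have "h (restrict (\<lambda>j. ncount (PP \<omega>) (Ec j)) J) = (\<Sum>x\<in>T. Wy x \<omega>)" for \<omega>
    unfolding h_def Wy_def
  proof (rule sum.cong)
    fix x assume "x \<in> T"
    then have x0: "(x, 0) \<in> T \<times> {0, 1::nat}" and x1: "(x, 1) \<in> T \<times> {0, 1::nat}" by simp_all
    have "x @ [0] \<in> J" unfolding J_def by (rule rev_image_eqI[OF x0]) simp
    moreover have "x @ [1] \<in> J" unfolding J_def by (rule rev_image_eqI[OF x1]) simp
    ultimately show "(if restrict (\<lambda>j. ncount (PP \<omega>) (Ec j)) J (x @ [0]) = 0 then 1 else 0) +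
          (if restrict (\<lambda>j. ncount (PP \<omega>) (Ec j)) J (x @ [1]) = 0 then 1 else 0) =
          (if ncount (PP \<omega>) (Ec (x @ [0])) = 0 then 1 else 0) + (if ncount (PP \<omega>) (Ec (x @ [1])) = 0 then 1 else 0)"
      by simp
  qed simp
  then show ?thesis using m by simp
qed

end

lemma sum_upd_Suc: "(\<Sum>i<Suc m. (f(m := y)) i) = y + (\<Sum>i<m. f i)"
proof -
  have "(\<Sum>i<m. (f(m := y)) i) = (\<Sum>i<m. f i)" by (rule sum.cong) auto
  then show ?thesis by (simp add: add.commute)
qed

lemma iid_sum_Suc: "iid_sum_pmf (Suc m) q = map_pmf (\<lambda>(y, s). y + s) (pair_pmf q (iid_sum_pmf m q))"
proof -
  have "iid_sum_pmf (Suc m) q = map_pmf (\<lambda>f. \<Sum>i<Suc m. f i) (Pi_pmf (insert m {..<m}) 0 (\<lambda>_. q))"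
    unfolding iid_sum_pmf_def lessThan_Suc ..
  also have "\<dots> = map_pmf (\<lambda>f. \<Sum>i<Suc m. f i) (map_pmf (\<lambda>(y,f). f(m:=y)) (pair_pmf q (Pi_pmf {..<m} 0 (\<lambda>_. q))))"
    by (subst Pi_pmf_insert) simp_all
  also have "\<dots> = map_pmf (\<lambda>(y,f). y + (\<Sum>i<m. f i)) (pair_pmf q (Pi_pmf {..<m} 0 (\<lambda>_. q)))"
    unfolding pmf.map_comp by (rule map_pmf_cong) (auto simp: sum_upd_Suc)
  also have "\<dots> = map_pmf (\<lambda>(y, s). y + s) (pair_pmf q (iid_sum_pmf m q))"
    unfolding iid_sum_pmf_def pair_map_pmf2 pmf.map_comp by (rule map_pmf_cong) auto
  finally show ?thesis .
qed

lemma pmf_conv: fixes A B :: "nat pmf" and k :: nat shows "pmf (map_pmf (\<lambda>(y, s). y + s) (pair_pmf A B)) k = (\<Sum>j\<le>k. pmf A j * pmf B (k - j))"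
proof -
  have e: "(\<lambda>(y, s). y + s) -` {k} = (\<lambda>j. (j, k - j)) ` {..k}"
  proof (rule set_eqI)
    fix p :: "nat \<times> nat"
    obtain y s where p: "p = (y, s)" by (cases p)
    show "p \<in> (\<lambda>(y, s). y + s) -` {k} \<longleftrightarrow> p \<in> (\<lambda>j. (j, k - j)) ` {..k}"
      unfolding p by (auto simp: image_iff)
  qed
  have inj: "inj_on (\<lambda>j. (j, k - j)) {..k}" by (rule inj_onI) simp
  have "pmf (map_pmf (\<lambda>(y, s). y + s) (pair_pmf A B)) k = measure (pair_pmf A B) ((\<lambda>(y, s). y + s) -` {k})"
    by (rule pmf_map)
  also have "\<dots> = sum (pmf (pair_pmf A B)) ((\<lambda>j. (j, k - j)) ` {..k})"
    unfolding e by (rule measure_measure_pmf_finite) simp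
  also have "\<dots> = (\<Sum>j\<le>k. pmf (pair_pmf A B) (j, k - j))"
    by (subst sum.reindex[OF inj]) (simp add: comp_def)
  also have "\<dots> = (\<Sum>j\<le>k. pmf A j * pmf B (k - j))" by (simp add: pmf_pair)
  finally show ?thesis .
qed

lemma pmf_iid_Suc: "pmf (iid_sum_pmf (Suc m) q) k = (\<Sum>j\<le>k. pmf q j * pmf (iid_sum_pmf m q) (k - j))"
  unfolding iid_sum_Suc by (rule pmf_conv)

lemma iid_sum_0: "iid_sum_pmf 0 q = return_pmf 0"
  unfolding iid_sum_pmf_def by simp

lemma pmf_bin2:
  assumes "0 \<le> p" "p \<le> 1"
  shows "pmf (binomial_pmf 2 p) j = (if j = 0 then (1 - p)^2 else if j = 1 then 2 * p * (1 - p) else if j = 2 then p^2 else 0)"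
proof -
  have "pmf (binomial_pmf 2 p) j = real (2 choose j) * p ^ j * (1 - p) ^ (2 - j)"
    by (rule pmf_binomial[OF assms])
  moreover have "j > 2 \<Longrightarrow> (2 choose j) = 0" by simp
  ultimately show ?thesis
    by (cases "j = 0"; cases "j = 1"; cases "j = 2") (auto simp: numeral_2_eq_2)
qed

context PPs
begin

abbreviation "pp \<equiv> exp (- \<alpha> / 4)"

lemma Ec_emeasure:
  assumes c: "c \<in> tverts" "c \<noteq> []"
  shows "emeasure \<nu> (Ec c) = ennreal (\<alpha> / 4)"
proof -
  have t: "c @ [0] \<in> tverts" "c @ [1] \<in> tverts" using tverts_snoc[OF c] by simp_all
  have ne: "c @ [0] \<noteq> c @ [1]" by simp
  have d: "tdist (c @ [0]) (c @ [1]) = 2" using tdist_eq[OF t] D_snoc_snoc[of c 0 1] by simp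
  have "emeasure \<mu> {l \<in> tlines. c @ [0] \<in> l \<and> c @ [1] \<in> l} = ennreal ((1/2) ^ tdist (c @ [0]) (c @ [1]))"
    using lm t ne unfolding is_line_measure_def by blast
  then have "emeasure \<mu> (Ec c) = ennreal (1/4)" unfolding Ec_def d by (simp add: power2_eq_square)
  then have "emeasure \<nu> (Ec c) = ennreal \<alpha> * ennreal (1/4)" by simp
  also have "\<dots> = ennreal (\<alpha> / 4)" using apos by (simp add: ennreal_mult[symmetric])
  finally show ?thesis .
qed

lemma prob_Ec0:
  assumes c: "c \<in> tverts" "c \<noteq> []"
  shows "prob {\<omega> \<in> space M. ncount (PP \<omega>) (Ec c) = 0} = pp"
proof -
  have em: "emeasure \<nu> (Ec c) < \<infinity>" unfolding Ec_emeasure[OF c] by simp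
  have "prob {\<omega> \<in> space M. ncount (PP \<omega>) (Ec c) = 0} = exp (- enn2real (emeasure \<nu> (Ec c)))"
    by (rule N_poisson0[OF Ec_meas[OF c] em])
  also have "\<dots> = pp" unfolding Ec_emeasure[OF c] using apos by simp
  finally show ?thesis .
qed

lemma Ec_event_GR:
  assumes c: "c \<in> tverts" "c \<noteq> []"
  shows "{\<omega> \<in> space M. ncount (PP \<omega>) (Ec c) \<in> B} \<in> sets (GR M PP (Ec c))"
  by (rule meas_set_GR, rule N_meas_GR) (simp_all add: Ec_meas[OF c])

lemma pp_bounds: "0 \<le> pp" "pp \<le> 1" using apos by auto

lemma prob_W:
  assumes y: "y \<in> Vd n" and n: "n \<ge> 1"
  shows "prob {\<omega> \<in> space M. Wy y \<omega> = j} = pmf (binomial_pmf 2 pp) j"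
proof -
  have yt: "y \<in> tverts" "y \<noteq> []" using y n unfolding Vd_def by auto
  have c0: "y @ [0] \<in> tverts" "y @ [0] \<noteq> []" using tverts_snoc[OF yt] by simp_all
  have c1: "y @ [1] \<in> tverts" "y @ [1] \<noteq> []" using tverts_snoc[OF yt] by simp_all
  define E0 where "E0 = {\<omega> \<in> space M. ncount (PP \<omega>) (Ec (y @ [0])) \<in> {0}}"
  define E1 where "E1 = {\<omega> \<in> space M. ncount (PP \<omega>) (Ec (y @ [1])) \<in> {0}}"
  have G0: "E0 \<in> sets (GR M PP (Ec (y @ [0])))" unfolding E0_def by (rule Ec_event_GR[OF c0])
  have G1: "E1 \<in> sets (GR M PP (Ec (y @ [1])))" unfolding E1_def by (rule Ec_event_GR[OF c1])
  have G0c: "space M - E0 \<in> sets (GR M PP (Ec (y @ [0])))"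
    using sets.compl_sets[OF G0] unfolding space_GR .
  have G1c: "space M - E1 \<in> sets (GR M PP (Ec (y @ [1])))"
    using sets.compl_sets[OF G1] unfolding space_GR .
  have R: "Ec (y @ [0]) \<inter> Ec (y @ [1]) = {}" by (rule Ec_disj) simp_all
  have ev: "E0 \<in> events" "E1 \<in> events" using subsetD[OF GR_events G0] subsetD[OF GR_events G1] .
  have p0: "prob E0 = pp" using prob_Ec0[OF c0] unfolding E0_def by simp
  have p1: "prob E1 = pp" using prob_Ec0[OF c1] unfolding E1_def by simp
  have pc0: "prob (space M - E0) = 1 - pp" using prob_compl[OF ev(1)] p0 by simp
  have pc1: "prob (space M - E1) = 1 - pp" using prob_compl[OF ev(2)] p1 by simp
  have i11: "prob (E0 \<inter> E1) = pp * pp" using indep_region[OF R G0 G1] p0 p1 by simp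
  have i01: "prob ((space M - E0) \<inter> E1) = (1 - pp) * pp" using indep_region[OF R G0c G1] pc0 p1 by simp
  have i10: "prob (E0 \<inter> (space M - E1)) = pp * (1 - pp)" using indep_region[OF R G0 G1c] p0 pc1 by simp
  have i00: "prob ((space M - E0) \<inter> (space M - E1)) = (1 - pp) * (1 - pp)"
    using indep_region[OF R G0c G1c] pc0 pc1 by simp
  have W: "Wy y \<omega> = (if \<omega> \<in> E0 then 1 else 0) + (if \<omega> \<in> E1 then 1 else 0)" if "\<omega> \<in> space M" for \<omega>
    unfolding Wy_def E0_def E1_def using that by simp
  have sub: "E0 \<subseteq> space M" "E1 \<subseteq> space M" unfolding E0_def E1_def by auto
  have key: "\<omega> \<in> {\<omega> \<in> space M. Wy y \<omega> = j} \<longleftrightarrow>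
      \<omega> \<in> space M \<and> (if \<omega> \<in> E0 then 1 else 0) + (if \<omega> \<in> E1 then 1 else 0) = j" for \<omega>
  proof (cases "\<omega> \<in> space M")
    case True then show ?thesis using W[OF True] by simp
  qed simp
  show ?thesis
  proof (cases "j = 0")
    case True
    have "{\<omega> \<in> space M. Wy y \<omega> = j} = (space M - E0) \<inter> (space M - E1)"
    proof (rule set_eqI)
      fix \<omega> show "\<omega> \<in> {\<omega> \<in> space M. Wy y \<omega> = j} \<longleftrightarrow> \<omega> \<in> (space M - E0) \<inter> (space M - E1)"
        unfolding key using True sub by (cases "\<omega> \<in> E0"; cases "\<omega> \<in> E1") auto
    qed
    then show ?thesis using i00 True pmf_bin2[OF pp_bounds] by (simp add: power2_eq_square)
  next
    case F0: False
    show ?thesis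
    proof (cases "j = 1")
      case True
      have "{\<omega> \<in> space M. Wy y \<omega> = j} = (E0 \<inter> (space M - E1)) \<union> ((space M - E0) \<inter> E1)"
      proof (rule set_eqI)
        fix \<omega> show "\<omega> \<in> {\<omega> \<in> space M. Wy y \<omega> = j} \<longleftrightarrow> \<omega> \<in> (E0 \<inter> (space M - E1)) \<union> ((space M - E0) \<inter> E1)"
          unfolding key using True sub by (cases "\<omega> \<in> E0"; cases "\<omega> \<in> E1") auto
      qed
      moreover have "prob ((E0 \<inter> (space M - E1)) \<union> ((space M - E0) \<inter> E1)) =
          prob (E0 \<inter> (space M - E1)) + prob ((space M - E0) \<inter> E1)"
        by (rule finite_measure_Union) (use ev in \<open>blast+\<close>)
      ultimately show ?thesis using i10 i01 True pmf_bin2[OF pp_bounds] by simp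
    next
      case F1: False
      show ?thesis
      proof (cases "j = 2")
        case True
        have "{\<omega> \<in> space M. Wy y \<omega> = j} = E0 \<inter> E1"
        proof (rule set_eqI)
          fix \<omega> show "\<omega> \<in> {\<omega> \<in> space M. Wy y \<omega> = j} \<longleftrightarrow> \<omega> \<in> E0 \<inter> E1"
            unfolding key using True sub by (cases "\<omega> \<in> E0"; cases "\<omega> \<in> E1") auto
        qed
        then show ?thesis using i11 True pmf_bin2[OF pp_bounds] by (simp add: power2_eq_square)
      next
        case False
        have "{\<omega> \<in> space M. Wy y \<omega> = j} = {}"
        proof (rule set_eqI)
          fix \<omega> show "\<omega> \<in> {\<omega> \<in> space M. Wy y \<omega> = j} \<longleftrightarrow> \<omega> \<in> {}"
            unfolding key using F0 F1 False sub by (cases "\<omega> \<in> E0"; cases "\<omega> \<in> E1") auto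
        qed
        then have "prob {\<omega> \<in> space M. Wy y \<omega> = j} = prob {}" by (rule arg_cong)
        then show ?thesis using F0 F1 False pmf_bin2[OF pp_bounds] by simp
      qed
    qed
  qed
qed

end

context PPs
begin

lemma GR_Int: "a \<in> sets (GR M PP R) \<Longrightarrow> b \<in> sets (GR M PP R) \<Longrightarrow> a \<inter> b \<in> sets (GR M PP R)"
  by (rule sets.Int)

lemma sumW_set:
  assumes T: "T \<subseteq> Vd n" and n: "n \<ge> 1"
  shows "{\<omega> \<in> space M. (\<Sum>x\<in>T. Wy x \<omega>) = k} \<in> sets (GR M PP (Rr T))"
  using meas_set_GR[OF W_meas[OF T n], of "{k}"] by simp

lemma Rr_disj:
  assumes y: "y \<in> Vd n" and T: "T \<subseteq> Vd n" and yT: "y \<notin> T"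
  shows "(lines_meeting_ball n \<union> Rr T) \<inter> Rr {y} = {}"
proof (rule equals0I)
  fix l assume "l \<in> (lines_meeting_ball n \<union> Rr T) \<inter> Rr {y}"
  then have l1: "l \<in> lines_meeting_ball n \<or> l \<in> Rr T" and l2: "l \<in> Ec (y @ [0]) \<or> l \<in> Ec (y @ [1])"
    unfolding Rr_def by auto
  have ly: "length y = n" using y unfolding Vd_def by simp
  obtain a where a: "l \<in> Ec (y @ [a])" using l2 by blast
  show False
  proof (cases "l \<in> lines_meeting_ball n")
    case True
    have "Ec (y @ [a]) \<inter> lines_meeting_ball n = {}" by (rule Ec_ball) (simp add: ly)
    then show False using True a by blast
  next
    case False
    then have "l \<in> Rr T" using l1 by blast
    then obtain x b where xb: "x \<in> T" "l \<in> Ec (x @ [b])" unfolding Rr_def by blast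
    have lx: "length x = n" using xb T unfolding Vd_def by auto
    have "x @ [b] \<noteq> y @ [a]" using xb(1) yT by auto
    then have "Ec (x @ [b]) \<inter> Ec (y @ [a]) = {}" by (rule Ec_disj[rotated]) (simp add: lx ly)
    then show False using xb(2) a by blast
  qed
qed

lemma claimQ:
  assumes n: "n \<ge> 1" and T: "T \<subseteq> Vd n"
  shows "\<forall>a \<in> sets (GR M PP (lines_meeting_ball n)). \<forall>k.
     prob (a \<inter> {\<omega> \<in> space M. (\<Sum>x\<in>T. Wy x \<omega>) = k}) =
     prob a * pmf (iid_sum_pmf (card T) (binomial_pmf 2 pp)) k"
proof -
  let ?L = "lines_meeting_ball n"
  let ?q = "binomial_pmf 2 pp"
  have fT: "finite T" using T finite_Vd finite_subset by blast
  show ?thesis using fT T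
  proof (induction T rule: finite_induct)
    case empty
    show ?case
    proof (intro ballI allI)
      fix a k assume a: "a \<in> sets (GR M PP ?L)"
      have aev: "a \<subseteq> space M" using subsetD[OF GR_events a] sets.sets_into_space by blast
      show "prob (a \<inter> {\<omega> \<in> space M. (\<Sum>x\<in>{}. Wy x \<omega>) = k}) = prob a * pmf (iid_sum_pmf (card {}) ?q) k"
      proof (cases "k = 0")
        case True
        have "a \<inter> {\<omega> \<in> space M. (\<Sum>x\<in>{}. Wy x \<omega>) = k} = a" using True aev by auto
        then show ?thesis using True by (simp add: iid_sum_0)
      next
        case False
        have "a \<inter> {\<omega> \<in> space M. (\<Sum>x\<in>{}. Wy x \<omega>) = k} = {}" using False by auto
        then show ?thesis using False by (simp add: iid_sum_0)
      qed
    qed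
  next
    case (insert y T)
    have TV: "T \<subseteq> Vd n" and yV: "y \<in> Vd n" using insert.prems by auto
    note IH = insert.IH[OF TV]
    show ?case
    proof (intro ballI allI)
      fix a k assume a: "a \<in> sets (GR M PP ?L)"
      define B where "B j = a \<inter> {\<omega> \<in> space M. (\<Sum>x\<in>T. Wy x \<omega>) = k - j}" for j
      define C where "C j = {\<omega> \<in> space M. Wy y \<omega> = j}" for j
      have sumins: "(\<Sum>x\<in>insert y T. Wy x \<omega>) = Wy y \<omega> + (\<Sum>x\<in>T. Wy x \<omega>)" for \<omega>
        using insert.hyps by simp
      have seteq: "a \<inter> {\<omega> \<in> space M. (\<Sum>x\<in>insert y T. Wy x \<omega>) = k} = (\<Union>j\<in>{..k}. B j \<inter> C j)"
      proof (rule set_eqI)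
        fix \<omega>
        show "\<omega> \<in> a \<inter> {\<omega> \<in> space M. (\<Sum>x\<in>insert y T. Wy x \<omega>) = k} \<longleftrightarrow> \<omega> \<in> (\<Union>j\<in>{..k}. B j \<inter> C j)"
        proof
          assume h: "\<omega> \<in> a \<inter> {\<omega> \<in> space M. (\<Sum>x\<in>insert y T. Wy x \<omega>) = k}"
          then have s: "Wy y \<omega> + (\<Sum>x\<in>T. Wy x \<omega>) = k" using sumins by simp
          have "\<omega> \<in> B (Wy y \<omega>) \<inter> C (Wy y \<omega>)" unfolding B_def C_def using h s by auto
          moreover have "Wy y \<omega> \<in> {..k}" using s by simp
          ultimately show "\<omega> \<in> (\<Union>j\<in>{..k}. B j \<inter> C j)" by blast
        next
          assume "\<omega> \<in> (\<Union>j\<in>{..k}. B j \<inter> C j)"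
          then obtain j where j: "j \<le> k" "\<omega> \<in> B j" "\<omega> \<in> C j" by auto
          have "Wy y \<omega> + (\<Sum>x\<in>T. Wy x \<omega>) = k" using j unfolding B_def C_def by auto
          then show "\<omega> \<in> a \<inter> {\<omega> \<in> space M. (\<Sum>x\<in>insert y T. Wy x \<omega>) = k}"
            using j unfolding B_def sumins by auto
        qed
      qed
      have R: "(?L \<union> Rr T) \<inter> Rr {y} = {}" by (rule Rr_disj[OF yV TV insert.hyps(2)])
      have aL: "a \<in> sets (GR M PP (?L \<union> Rr T))" using GR_mono[of ?L "?L \<union> Rr T"] a by blast
      have BG: "B j \<in> sets (GR M PP (?L \<union> Rr T))" for j
      proof -
        have "{\<omega> \<in> space M. (\<Sum>x\<in>T. Wy x \<omega>) = k - j} \<in> sets (GR M PP (Rr T))" by (rule sumW_set[OF TV n])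
        then have "{\<omega> \<in> space M. (\<Sum>x\<in>T. Wy x \<omega>) = k - j} \<in> sets (GR M PP (?L \<union> Rr T))"
          using GR_mono[of "Rr T" "?L \<union> Rr T"] by blast
        then show ?thesis unfolding B_def by (rule GR_Int[OF aL])
      qed
      have CG: "C j \<in> sets (GR M PP (Rr {y}))" for j
      proof -
        have "{\<omega> \<in> space M. (\<Sum>x\<in>{y}. Wy x \<omega>) = j} \<in> sets (GR M PP (Rr {y}))"
          by (rule sumW_set) (use yV n in auto)
        then show ?thesis unfolding C_def by simp
      qed
      have ev: "B j \<inter> C j \<in> events" for j
        using subsetD[OF GR_events BG] subsetD[OF GR_events CG] by (rule sets.Int)
      have disj: "disjoint_family_on (\<lambda>j. B j \<inter> C j) {..k}"
        unfolding disjoint_family_on_def C_def by auto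
      have "prob (a \<inter> {\<omega> \<in> space M. (\<Sum>x\<in>insert y T. Wy x \<omega>) = k}) = (\<Sum>j\<in>{..k}. prob (B j \<inter> C j))"
        unfolding seteq by (rule finite_measure_finite_Union) (use ev disj in auto)
      also have "\<dots> = (\<Sum>j\<in>{..k}. prob a * pmf (iid_sum_pmf (card T) ?q) (k - j) * pmf ?q j)"
      proof (rule sum.cong)
        fix j assume "j \<in> {..k}"
        have "prob (B j \<inter> C j) = prob (B j) * prob (C j)" by (rule indep_region[OF R BG CG])
        moreover have "prob (B j) = prob a * pmf (iid_sum_pmf (card T) ?q) (k - j)"
          unfolding B_def using IH a by blast
        moreover have "prob (C j) = pmf ?q j" unfolding C_def by (rule prob_W[OF yV n])
        ultimately show "prob (B j \<inter> C j) = prob a * pmf (iid_sum_pmf (card T) ?q) (k - j) * pmf ?q j" by simp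
      qed simp
      also have "\<dots> = prob a * (\<Sum>j\<le>k. pmf ?q j * pmf (iid_sum_pmf (card T) ?q) (k - j))"
        by (simp add: sum_distrib_left mult_ac)
      also have "\<dots> = prob a * pmf (iid_sum_pmf (card (insert y T)) ?q) k"
        using insert.hyps by (simp add: pmf_iid_Suc)
      finally show "prob (a \<inter> {\<omega> \<in> space M. (\<Sum>x\<in>insert y T. Wy x \<omega>) = k}) =
          prob a * pmf (iid_sum_pmf (card (insert y T)) ?q) k" .
    qed
  qed
qed

end

context PPs
begin

lemma Z_meas:
  assumes "m \<le> n"
  shows "(\<lambda>\<omega>. Zcount (PP \<omega>) m) \<in> measurable (GR M PP (lines_meeting_ball n)) (count_space UNIV)"
  unfolding Z_eq by (rule survS_meas[OF assms])

lemma Z_meas_M: "(\<lambda>\<omega>. Zcount (PP \<omega>) m) \<in> measurable M (count_space UNIV)"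
  by (rule measurable_from_subalg[OF subalg_GR Z_meas[of m m]]) simp

lemma Z_event: "{\<omega> \<in> space M. Zcount (PP \<omega>) m = k} \<in> events"
proof -
  have "(\<lambda>\<omega>. Zcount (PP \<omega>) m) -` {k} \<inter> space M \<in> events" by (rule measurable_sets[OF Z_meas_M]) simp
  moreover have "(\<lambda>\<omega>. Zcount (PP \<omega>) m) -` {k} \<inter> space M = {\<omega> \<in> space M. Zcount (PP \<omega>) m = k}" by blast
  ultimately show ?thesis by simp
qed

lemma Z_Suc_W:
  assumes w: "\<omega> \<in> space M" and n: "n \<ge> 1"
  shows "Zcount (PP \<omega>) (Suc n) = (\<Sum>x\<in>survS (PP \<omega>) n. Wy x \<omega>)"
  unfolding Z_Suc[OF PP_sub[OF w] n] Wy_def ncount_zero ..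

lemma part1:
  assumes n: "n \<ge> 1"
  shows "AE \<omega> in M. real_cond_exp M (GR M PP (lines_meeting_ball n))
            (indicator {\<omega> \<in> space M. Zcount (PP \<omega>) (Suc n) = k}) \<omega> =
          pmf (iid_sum_pmf (Zcount (PP \<omega>) n) (binomial_pmf 2 pp)) k"
proof -
  let ?L = "lines_meeting_ball n"
  let ?F = "GR M PP ?L"
  let ?q = "binomial_pmf 2 pp"
  let ?E = "{\<omega> \<in> space M. Zcount (PP \<omega>) (Suc n) = k}"
  define g where "g \<omega> = pmf (iid_sum_pmf (Zcount (PP \<omega>) n) ?q) k" for \<omega>
  interpret FF: finite_measure_subalgebra M ?F
    by unfold_locales (rule subalg_GR)
  have Eev: "?E \<in> events" by (rule Z_event)
  have intf: "integrable M (indicator ?E :: 'w \<Rightarrow> real)"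
    by (rule integrable_real_indicator[OF Eev]) (simp add: emeasure_eq_measure)
  have gF: "g \<in> borel_measurable ?F"
  proof -
    have "(\<lambda>m. pmf (iid_sum_pmf m ?q) k) \<in> borel_measurable (count_space UNIV)" by simp
    from measurable_compose[OF Z_meas[of n n] this] show ?thesis unfolding g_def by (simp add: comp_def)
  qed
  have gM: "g \<in> borel_measurable M" by (rule measurable_from_subalg[OF subalg_GR gF])
  have intg: "integrable M g"
  proof (rule integrable_const_bound[where B=1])
    show "AE x in M. norm (g x) \<le> 1" unfolding g_def by (simp add: pmf_le_1)
  qed (rule gM)
  define ES where "ES T = {\<omega> \<in> space M. survS (PP \<omega>) n = T}" for T
  have ESF: "ES T \<in> sets ?F" for T
  proof -
    have "(\<lambda>\<omega>. id (survS (PP \<omega>) n)) \<in> measurable ?F (count_space UNIV)" by (rule survS_meas) simp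
    from meas_set_GR[OF this, of "{T}"] show ?thesis unfolding ES_def by simp
  qed
  let ?P = "Pow (Vd n)"
  have finP: "finite ?P" using finite_Vd by simp
  have ESdisj: "disjoint_family_on ES ?P" unfolding disjoint_family_on_def ES_def by auto
  have EScov: "\<omega> \<in> space M \<Longrightarrow> \<omega> \<in> ES (survS (PP \<omega>) n) \<and> survS (PP \<omega>) n \<in> ?P" for \<omega>
    unfolding ES_def using survS_sub by auto
  have "(\<integral>x\<in>A. indicator ?E x \<partial>M) = (\<integral>x\<in>A. g x \<partial>M)" if A: "A \<in> sets ?F" for A
  proof -
    have AM: "A \<in> events" using A subalg_GR unfolding subalgebra_def by blast
    have AES: "A \<inter> ES T \<in> sets ?F" for T using A ESF by (rule sets.Int)
    have AESM: "A \<inter> ES T \<in> events" for T using AES subalg_GR unfolding subalgebra_def by blast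
    define c where "c T = pmf (iid_sum_pmf (card T) ?q) k" for T :: "nat list set"
    have ee: "(\<lambda>x. indicator A x *\<^sub>R indicator ?E x) = (indicator (A \<inter> ?E) :: 'w \<Rightarrow> real)"
      by (rule ext) (simp add: indicator_def)
    have "(\<integral>x\<in>A. indicator ?E x \<partial>M) = (\<integral>x. indicator (A \<inter> ?E) x \<partial>M)"
      unfolding set_lebesgue_integral_def by (intro arg_cong[where f="integral\<^sup>L M"] ext) (simp add: indicator_def)
    also have "\<dots> = prob (A \<inter> ?E)" using AM Eev by simp
    also have "A \<inter> ?E = (\<Union>T\<in>?P. (A \<inter> ES T) \<inter> {\<omega> \<in> space M. (\<Sum>x\<in>T. Wy x \<omega>) = k})"
    proof (rule set_eqI)
      fix \<omega>
      show "\<omega> \<in> A \<inter> ?E \<longleftrightarrow> \<omega> \<in> (\<Union>T\<in>?P. (A \<inter> ES T) \<inter> {\<omega> \<in> space M. (\<Sum>x\<in>T. Wy x \<omega>) = k})"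
      proof (cases "\<omega> \<in> space M")
        case True
        note Z = Z_Suc_W[OF True n]
        show ?thesis
        proof
          assume "\<omega> \<in> A \<inter> ?E"
          then show "\<omega> \<in> (\<Union>T\<in>?P. (A \<inter> ES T) \<inter> {\<omega> \<in> space M. (\<Sum>x\<in>T. Wy x \<omega>) = k})"
            using EScov[OF True] Z True by auto
        next
          assume "\<omega> \<in> (\<Union>T\<in>?P. (A \<inter> ES T) \<inter> {\<omega> \<in> space M. (\<Sum>x\<in>T. Wy x \<omega>) = k})"
          then obtain T where "\<omega> \<in> A" "\<omega> \<in> ES T" "(\<Sum>x\<in>T. Wy x \<omega>) = k" by blast
          then show "\<omega> \<in> A \<inter> ?E" using Z True unfolding ES_def by simp
        qed
      next
        case False then show ?thesis unfolding ES_def by blast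
      qed
    qed
    also have "prob (\<Union>T\<in>?P. (A \<inter> ES T) \<inter> {\<omega> \<in> space M. (\<Sum>x\<in>T. Wy x \<omega>) = k}) =
        (\<Sum>T\<in>?P. prob ((A \<inter> ES T) \<inter> {\<omega> \<in> space M. (\<Sum>x\<in>T. Wy x \<omega>) = k}))"
    proof (rule finite_measure_finite_Union[OF finP])
      show "(\<lambda>T. (A \<inter> ES T) \<inter> {\<omega> \<in> space M. (\<Sum>x\<in>T. Wy x \<omega>) = k}) ` ?P \<subseteq> events"
      proof
        fix X assume "X \<in> (\<lambda>T. (A \<inter> ES T) \<inter> {\<omega> \<in> space M. (\<Sum>x\<in>T. Wy x \<omega>) = k}) ` ?P"
        then obtain T where T: "T \<in> ?P" "X = (A \<inter> ES T) \<inter> {\<omega> \<in> space M. (\<Sum>x\<in>T. Wy x \<omega>) = k}" by blast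
        have "{\<omega> \<in> space M. (\<Sum>x\<in>T. Wy x \<omega>) = k} \<in> sets (GR M PP (Rr T))"
          by (rule sumW_set) (use T n in auto)
        then have "{\<omega> \<in> space M. (\<Sum>x\<in>T. Wy x \<omega>) = k} \<in> events" using GR_events by blast
        then show "X \<in> events" unfolding T(2) using AESM by (rule sets.Int[rotated])
      qed
      show "disjoint_family_on (\<lambda>T. (A \<inter> ES T) \<inter> {\<omega> \<in> space M. (\<Sum>x\<in>T. Wy x \<omega>) = k}) ?P"
        using ESdisj unfolding disjoint_family_on_def by blast
    qed
    also have "\<dots> = (\<Sum>T\<in>?P. prob (A \<inter> ES T) * c T)"
    proof (rule sum.cong)
      fix T assume "T \<in> ?P"
      then have "T \<subseteq> Vd n" by simp
      from claimQ[OF n this] AES[of T]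
      show "prob ((A \<inter> ES T) \<inter> {\<omega> \<in> space M. (\<Sum>x\<in>T. Wy x \<omega>) = k}) = prob (A \<inter> ES T) * c T"
        unfolding c_def by blast
    qed simp
    also have "\<dots> = (\<integral>x. (\<Sum>T\<in>?P. c T * indicator (A \<inter> ES T) x) \<partial>M)"
    proof -
      have "(\<integral>x. (\<Sum>T\<in>?P. c T * indicator (A \<inter> ES T) x) \<partial>M) = (\<Sum>T\<in>?P. (\<integral>x. c T * indicator (A \<inter> ES T) x \<partial>M))"
        by (rule Bochner_Integration.integral_sum)
          (use AESM in \<open>simp add: integrable_real_indicator emeasure_eq_measure\<close>)
      also have "\<dots> = (\<Sum>T\<in>?P. c T * prob (A \<inter> ES T))"
        by (rule sum.cong) (use AESM in \<open>simp_all add: Int_absorb2 sets.sets_into_space\<close>)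
      finally show ?thesis by (simp add: mult.commute)
    qed
    also have "\<dots> = (\<integral>x. indicator A x * g x \<partial>M)"
    proof (rule Bochner_Integration.integral_cong[OF refl])
      fix \<omega> assume w: "\<omega> \<in> space M"
      define T0 where "T0 = survS (PP \<omega>) n"
      have T0: "\<omega> \<in> ES T0" "T0 \<in> ?P" using EScov[OF w] unfolding T0_def by auto
      have "(\<Sum>T\<in>?P. c T * indicator (A \<inter> ES T) \<omega>) = (\<Sum>T\<in>{T0}. c T * indicator (A \<inter> ES T) \<omega>)"
      proof (rule sum.mono_neutral_right[OF finP])
        show "{T0} \<subseteq> ?P" using T0 by simp
        show "\<forall>T\<in>?P - {T0}. c T * indicator (A \<inter> ES T) \<omega> = 0"
        proof
          fix T assume "T \<in> ?P - {T0}"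
          then have ne: "T \<noteq> T0" by blast
          have "\<omega> \<notin> ES T"
          proof
            assume "\<omega> \<in> ES T"
            then have "survS (PP \<omega>) n = T" unfolding ES_def by blast
            then show False using ne unfolding T0_def by simp
          qed
          then show "c T * indicator (A \<inter> ES T) \<omega> = 0" by simp
        qed
      qed
      also have "\<dots> = indicator A \<omega> * g \<omega>"
        using T0(1) unfolding g_def c_def ES_def Z_eq T0_def by (simp add: indicator_def)
      finally show "(\<Sum>T\<in>?P. c T * indicator (A \<inter> ES T) \<omega>) = indicator A \<omega> * g \<omega>" .
    qed
    also have "\<dots> = (\<integral>x\<in>A. g x \<partial>M)" unfolding set_lebesgue_integral_def by simp
    finally show ?thesis .
  qed
  then have "AE \<omega> in M. real_cond_exp M ?F (indicator ?E) \<omega> = g \<omega>"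
    by (intro FF.real_cond_exp_charact intf intg gF)
  then show ?thesis unfolding g_def .
qed

end

context PPs
begin

lemma part2:
  assumes n: "n \<ge> 1"
  shows "AE \<omega> in M. real_cond_exp M (hist M (\<lambda>n \<omega>. Zcount (PP \<omega>) n) n)
            (indicator {\<omega> \<in> space M. Zcount (PP \<omega>) (Suc n) = k}) \<omega> =
          pmf (iid_sum_pmf (Zcount (PP \<omega>) n) (binomial_pmf 2 pp)) k"
proof -
  let ?L = "lines_meeting_ball n"
  let ?F = "GR M PP ?L"
  let ?H = "hist M (\<lambda>n \<omega>. Zcount (PP \<omega>) n) n"
  let ?q = "binomial_pmf 2 pp"
  let ?E = "{\<omega> \<in> space M. Zcount (PP \<omega>) (Suc n) = k}"
  let ?GH = "{(\<lambda>\<omega>. Zcount (PP \<omega>) i) -` B \<inter> space M | i B. 1 \<le> i \<and> i \<le> n}"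
  define g where "g \<omega> = pmf (iid_sum_pmf (Zcount (PP \<omega>) n) ?q) k" for \<omega>
  interpret FF: finite_measure_subalgebra M ?F
    by unfold_locales (rule subalg_GR)
  have sH: "sets ?H = sigma_sets (space M) ?GH"
    unfolding hist_def by (rule sets_measure_of) blast
  have spH: "space ?H = space M"
    unfolding hist_def by (simp add: space_measure_of_conv)
  have GHF: "?GH \<subseteq> sets ?F"
  proof
    fix x assume "x \<in> ?GH"
    then have "\<exists>i B. x = (\<lambda>\<omega>. Zcount (PP \<omega>) i) -` B \<inter> space M \<and> 1 \<le> i \<and> i \<le> n"
      by (simp only: mem_Collect_eq)
    then obtain i B where x: "x = (\<lambda>\<omega>. Zcount (PP \<omega>) i) -` B \<inter> space M" and i: "i \<le> n"
      by (elim exE conjE) (rule that)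
    have "(\<lambda>\<omega>. Zcount (PP \<omega>) i) -` B \<inter> space ?F \<in> sets ?F"
      by (rule measurable_sets[OF Z_meas[OF i]]) simp
    then show "x \<in> sets ?F" unfolding x space_GR .
  qed
  have HF: "sets ?H \<subseteq> sets ?F"
  proof -
    have "sigma_sets (space ?F) ?GH \<subseteq> sets ?F" by (rule sets.sigma_sets_subset[OF GHF])
    then show ?thesis unfolding sH space_GR .
  qed
  have subFH: "subalgebra ?F ?H" unfolding subalgebra_def using spH space_GR HF by simp
  have subMH: "subalgebra M ?H" unfolding subalgebra_def using spH HF subalg_GR
    unfolding subalgebra_def by blast
  interpret HH: finite_measure_subalgebra M ?H
    by unfold_locales (rule subMH)
  have Eev: "?E \<in> events" by (rule Z_event)
  have intf: "integrable M (indicator ?E :: 'w \<Rightarrow> real)"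
    by (rule integrable_real_indicator[OF Eev]) (simp add: emeasure_eq_measure)
  have fM: "(indicator ?E :: 'w \<Rightarrow> real) \<in> borel_measurable M" using Eev by simp
  have ZH: "(\<lambda>\<omega>. Zcount (PP \<omega>) n) \<in> measurable ?H (count_space UNIV)"
  proof (rule measurableI)
    fix x assume "x \<in> space ?H" then show "Zcount (PP x) n \<in> space (count_space UNIV)" by simp
  next
    fix B :: "nat set" assume "B \<in> sets (count_space UNIV)"
    have "(\<lambda>\<omega>. Zcount (PP \<omega>) n) -` B \<inter> space M \<in> ?GH"
      unfolding mem_Collect_eq by (rule exI[of _ n], rule exI[of _ B]) (use n in simp)
    then have "(\<lambda>\<omega>. Zcount (PP \<omega>) n) -` B \<inter> space M \<in> sets ?H" unfolding sH by (rule sigma_sets.Basic)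
    then show "(\<lambda>\<omega>. Zcount (PP \<omega>) n) -` B \<inter> space ?H \<in> sets ?H" unfolding spH .
  qed
  have gH: "g \<in> borel_measurable ?H"
  proof -
    have "(\<lambda>m. pmf (iid_sum_pmf m ?q) k) \<in> borel_measurable (count_space UNIV)" by simp
    from measurable_compose[OF ZH this] show ?thesis unfolding g_def by (simp add: comp_def)
  qed
  have gM: "g \<in> borel_measurable M" by (rule measurable_from_subalg[OF subMH gH])
  have intg: "integrable M g"
  proof (rule integrable_const_bound[where B=1])
    show "AE x in M. norm (g x) \<le> 1" unfolding g_def by (simp add: pmf_le_1)
  qed (rule gM)
  have p1: "AE \<omega> in M. real_cond_exp M ?F (indicator ?E) \<omega> = g \<omega>"
    unfolding g_def by (rule part1[OF n])
  have h1: "AE \<omega> in M. real_cond_exp M ?H (real_cond_exp M ?F (indicator ?E)) \<omega> = real_cond_exp M ?H (indicator ?E) \<omega>"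
    by (rule HH.real_cond_exp_nested_subalg[OF subalg_GR subFH intf])
  have h2: "AE \<omega> in M. real_cond_exp M ?H (real_cond_exp M ?F (indicator ?E)) \<omega> = real_cond_exp M ?H g \<omega>"
    by (rule HH.real_cond_exp_cong[OF p1 borel_measurable_cond_exp2 gM])
  have h3: "AE \<omega> in M. real_cond_exp M ?H g \<omega> = g \<omega>"
    by (rule HH.real_cond_exp_F_meas[OF intg gH])
  have "AE \<omega> in M. real_cond_exp M ?H (indicator ?E) \<omega> = g \<omega>"
    using h1 h2 h3 by eventually_elim simp
  then show ?thesis unfolding g_def .
qed

end

theorem mainTheorem6:
  fixes M :: "'w measure" and \<mu> :: "nat list set measure"
    and PP :: "'w \<Rightarrow> nat list set set" and \<alpha> :: real
  assumes "\<alpha> > 0"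
    and "is_line_measure \<mu>"
    and "poisson_process M (scale_measure (ennreal \<alpha>) \<mu>) PP"
  shows "(\<forall>n\<ge>1. cond_iid_sum M (Fn M PP n) (\<lambda>\<omega>. Zcount (PP \<omega>) (Suc n))
                    (\<lambda>\<omega>. Zcount (PP \<omega>) n) (binomial_pmf 2 (exp (- \<alpha> / 4))))
         \<and> galton_watson M (\<lambda>n \<omega>. Zcount (PP \<omega>) n) (binomial_pmf 2 (exp (- \<alpha> / 4)))"
proof -
  interpret PPs M \<mu> PP \<alpha> by unfold_locales (rule assms)+
  have A: "cond_iid_sum M (Fn M PP n) (\<lambda>\<omega>. Zcount (PP \<omega>) (Suc n))
                    (\<lambda>\<omega>. Zcount (PP \<omega>) n) (binomial_pmf 2 (exp (- \<alpha> / 4)))" if n: "n \<ge> 1" for n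
    unfolding cond_iid_sum_def Fn_GR using part1[OF n] by blast
  have B: "cond_iid_sum M (hist M (\<lambda>n \<omega>. Zcount (PP \<omega>) n) n) (\<lambda>\<omega>. Zcount (PP \<omega>) (Suc n))
                    (\<lambda>\<omega>. Zcount (PP \<omega>) n) (binomial_pmf 2 (exp (- \<alpha> / 4)))" if n: "n \<ge> 1" for n
    unfolding cond_iid_sum_def using part2[OF n] by blast
  show ?thesis unfolding galton_watson_def using A B by blast
qed


end
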